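(* For every $\rho>0$ and every finite subsets $y\subset z$ of $\mathbb{R}^+$, $(\Gamma^{\rho,y}_t;t\ge0)\overset{d}{=}(\Gamma^{\rho,z}_t|_y;t\ge0)$, where $\Gamma^{\rho,z}|_y$ is the partition of $y$ induced by $\Gamma^{\rho,z}$ (with initial conditions related by restriction), and $\mu^{\rho,y}=\mathrm{Rest}_y\star\mu^{\rho,z}$.
   Context: For a finite set $z=\{z_0<\dots<z_n\}\subset\mathbb{R}^+$, the ARG $\Gamma^{\rho,z}$ is the continuous-time Markov chain on the set $\mathcal{P}_z$ of partitions of $z$ in which each pair of blocks merges at rate $1$, and each block $\{z_{i_1}<\dots<z_{i_k}\}$ splits into $\{z_{i_1},\dots,z_{i_j}\}$ and $\{z_{i_{j+1}},\dots,z_{i_k}\}$ ($j<k$) at rate $\rho(z_{i_{j+1}}-z_{i_j})$; no other transitions. $\mu^{\rho,z}$ is its unique invariant probability measure. $\mathrm{Rest}_y:\mathcal{P}_z\to\mathcal{P}_y$ maps a partition of $z$ to the partition of $y$ it induces, and $f\star\mu=\mu\circ f^{-1}$. *)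

theory Defs
  imports "HOL-Probability.Probability" "HOL-Library.Disjoint_Sets"
begin

definition partitions_of :: "real set \<Rightarrow> real set set set" where
  "partitions_of z = {P. partition_on z P}"

definition Rest :: "real set \<Rightarrow> real set set \<Rightarrow> real set set" where
  "Rest y P = (\<lambda>B. B \<inter> y) ` P - {{}}"

definition merge_rate :: "real set set \<Rightarrow> real set set \<Rightarrow> real" where
  "merge_rate P P' = real (card {{A, B} | A B. A \<in> P \<and> B \<in> P \<and> A \<noteq> B \<and>
                                   P' = insert (A \<union> B) (P - {A, B})})"

definition split_rate :: "real \<Rightarrow> real set set \<Rightarrow> real set set \<Rightarrow> real" where
  "split_rate \<rho> P P' = (\<Sum>(A, a, b) \<in> {(A, a, b). A \<in> P \<and> a \<in> A \<and> b \<in> A \<and> a < b \<and>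
        \<not> (\<exists>c\<in>A. a < c \<and> c < b) \<and>
        P' = insert {x\<in>A. x \<le> a} (insert {x\<in>A. b \<le> x} (P - {A}))}. \<rho> * (b - a))"

definition jump_rate :: "real \<Rightarrow> real set set \<Rightarrow> real set set \<Rightarrow> real" where
  "jump_rate \<rho> P P' = merge_rate P P' + split_rate \<rho> P P'"

definition arg_gen :: "real \<Rightarrow> real set \<Rightarrow> real set set \<Rightarrow> real set set \<Rightarrow> real" where
  "arg_gen \<rho> z P P' =
     (if P = P' then - (\<Sum>P''\<in>partitions_of z - {P}. jump_rate \<rho> P P'')
      else jump_rate \<rho> P P')"

fun mat_pow :: "'s set \<Rightarrow> ('s \<Rightarrow> 's \<Rightarrow> real) \<Rightarrow> nat \<Rightarrow> 's \<Rightarrow> 's \<Rightarrow> real" where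
  "mat_pow S Q 0 = (\<lambda>x x'. if x = x' then 1 else 0)"
| "mat_pow S Q (Suc n) = (\<lambda>x x'. \<Sum>w\<in>S. mat_pow S Q n x w * Q w x')"

definition arg_trans :: "real \<Rightarrow> real set \<Rightarrow> real \<Rightarrow> real set set \<Rightarrow> real set set \<Rightarrow> real" where
  "arg_trans \<rho> z t P P' =
     (\<Sum>n. t ^ n / fact n * mat_pow (partitions_of z) (arg_gen \<rho> z) n P P')"

fun path_prob :: "(real \<Rightarrow> 's \<Rightarrow> 's \<Rightarrow> real) \<Rightarrow> 's \<Rightarrow> real \<Rightarrow> real list \<Rightarrow> 's list \<Rightarrow> real" where
  "path_prob tr x0 t0 (t # ts) (x # xs) = tr (t - t0) x0 x * path_prob tr x t ts xs"
| "path_prob tr x0 t0 [] [] = 1"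
| "path_prob tr x0 t0 _ _ = 0"

(* Finite-dimensional distributions of Gamma^{rho,z} started from initial law pi:
   P(Gamma_{t_1} = x_1, ..., Gamma_{t_k} = x_k)  for 0 <= t_1 <= ... <= t_k *)
definition arg_fdd :: "real \<Rightarrow> real set \<Rightarrow> real set set pmf \<Rightarrow> real list \<Rightarrow> real set set list \<Rightarrow> real" where
  "arg_fdd \<rho> z \<pi> ts xs =
     (\<Sum>x0\<in>partitions_of z. pmf \<pi> x0 * path_prob (arg_trans \<rho> z) x0 0 ts xs)"

definition arg_invariant :: "real \<Rightarrow> real set \<Rightarrow> real set set pmf \<Rightarrow> bool" where
  "arg_invariant \<rho> z \<mu> \<longleftrightarrow> set_pmf \<mu> \<subseteq> partitions_of z \<and>
     (\<forall>t\<ge>0. \<forall>P'\<in>partitions_of z.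
        (\<Sum>P\<in>partitions_of z. pmf \<mu> P * arg_trans \<rho> z t P P') = pmf \<mu> P')"

definition arg_mu :: "real \<Rightarrow> real set \<Rightarrow> real set set pmf" where
  "arg_mu \<rho> z = (THE \<mu>. arg_invariant \<rho> z \<mu>)"

end

theory Submission
  imports Defs
begin

definition mexp :: "'s set \<Rightarrow> ('s \<Rightarrow> 's \<Rightarrow> real) \<Rightarrow> real \<Rightarrow> 's \<Rightarrow> 's \<Rightarrow> real" where
  "mexp S Q t x x' = (\<Sum>n. t ^ n / fact n * mat_pow S Q n x x')"

lemma arg_trans_mexp: "arg_trans \<rho> z = mexp (partitions_of z) (arg_gen \<rho> z)"
  by (simp add: fun_eq_iff arg_trans_def mexp_def)

lemma mat_pow_bound:
  assumes "finite S" "\<And>w w'. w\<in>S \<Longrightarrow> w'\<in>S \<Longrightarrow> \<bar>Q w w'\<bar> \<le> M" "x' \<in> S"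
  shows "\<bar>mat_pow S Q n x x'\<bar> \<le> (real (card S) * M)^n"
proof -
  have M0: "0 \<le> M" using assms(2)[OF assms(3) assms(3)] by linarith
  show ?thesis
  using assms(3)
proof (induction n arbitrary: x')
  case 0
  then show ?case by simp
next
  case (Suc n)
  have "\<bar>mat_pow S Q (Suc n) x x'\<bar> \<le> (\<Sum>w\<in>S. \<bar>mat_pow S Q n x w * Q w x'\<bar>)"
    by (simp add: sum_abs)
  also have "\<dots> \<le> (\<Sum>w\<in>S. (real (card S) * M)^n * M)"
    apply (rule sum_mono)
    apply (simp add: abs_mult)
    apply (rule mult_mono)
    using Suc assms M0 by auto
  also have "\<dots> = (real (card S) * M)^Suc n" by simp
  finally show ?case .
qed
qed

lemma mat_pow_bound_ex:
  assumes "finite S"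
  shows "\<exists>C. \<forall>n x. \<forall>x'\<in>S. \<bar>mat_pow S Q n x x'\<bar> \<le> C^n"
proof -
  define M where "M = (\<Sum>w\<in>S. \<Sum>w'\<in>S. \<bar>Q w w'\<bar>)"
  have "\<bar>Q w w'\<bar> \<le> M" if "w\<in>S" "w'\<in>S" for w w'
  proof -
    have "\<bar>Q w w'\<bar> \<le> (\<Sum>w'\<in>S. \<bar>Q w w'\<bar>)"
      using that assms by (intro member_le_sum) auto
    also have "\<dots> \<le> M" unfolding M_def
      using that assms by (intro member_le_sum[where f="\<lambda>w. \<Sum>w'\<in>S. \<bar>Q w w'\<bar>"]) (auto intro: sum_nonneg)
    finally show ?thesis .
  qed
  then show ?thesis using mat_pow_bound[OF assms] by blast
qed

lemma mexp_summable:
  assumes "finite S" "x' \<in> S"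
  shows "summable (\<lambda>n. t ^ n / fact n * mat_pow S Q n x x')"
proof -
  obtain C where C: "\<And>n x. \<bar>mat_pow S Q n x x'\<bar> \<le> C^n"
    using mat_pow_bound_ex[OF assms(1), of Q] assms(2) by blast
  show ?thesis
  proof (rule summable_comparison_test[OF _ summable_exp[of "\<bar>t\<bar> * \<bar>C\<bar>"]])
    show "\<exists>N. \<forall>n\<ge>N. norm (t ^ n / fact n * mat_pow S Q n x x') \<le> inverse (fact n) * (\<bar>t\<bar> * \<bar>C\<bar>) ^ n"
    proof (intro exI allI impI)
      fix n
      have "\<bar>mat_pow S Q n x x'\<bar> \<le> \<bar>C\<bar>^n" using C[of n x] by (metis abs_ge_self order.trans power_abs power_mono abs_ge_zero)
      then show "norm (t ^ n / fact n * mat_pow S Q n x x') \<le> inverse (fact n) * (\<bar>t\<bar> * \<bar>C\<bar>) ^ n"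
      proof -
        have "norm (t ^ n / fact n * mat_pow S Q n x x') = \<bar>t\<bar>^n / fact n * \<bar>mat_pow S Q n x x'\<bar>"
          by (simp add: abs_mult power_abs)
        also have "\<dots> \<le> \<bar>t\<bar>^n / fact n * \<bar>C\<bar>^n"
          by (intro mult_left_mono \<open>\<bar>mat_pow S Q n x x'\<bar> \<le> \<bar>C\<bar>^n\<close>) auto
        also have "\<dots> = inverse (fact n) * (\<bar>t\<bar> * \<bar>C\<bar>) ^ n"
          by (simp add: power_mult_distrib divide_inverse)
        finally show ?thesis .
      qed
    qed
  qed
qed

lemma mat_pow_lump:
  assumes fS: "finite S" and fT: "finite T" and RST: "R ` S \<subseteq> T"
    and lump: "\<And>x w. x \<in> S \<Longrightarrow> w \<in> T \<Longrightarrow> (\<Sum>x'\<in>{x'\<in>S. R x' = w}. Q x x') = Q' (R x) w"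
    and "x \<in> S" "w \<in> T"
  shows "(\<Sum>x'\<in>{x'\<in>S. R x' = w}. mat_pow S Q n x x') = mat_pow T Q' n (R x) w"
  using assms(6)
proof (induction n arbitrary: w)
  case 0
  show ?case using \<open>x \<in> S\<close> fS
    by (simp add: sum.delta'[where S="{x'\<in>S. R x' = w}"] )
next
  case (Suc n)
  have "(\<Sum>x'\<in>{x'\<in>S. R x' = w}. mat_pow S Q (Suc n) x x')
      = (\<Sum>u\<in>S. mat_pow S Q n x u * (\<Sum>x'\<in>{x'\<in>S. R x' = w}. Q u x'))"
    by (simp add: sum_distrib_left) (rule sum.swap)
  also have "\<dots> = (\<Sum>u\<in>S. mat_pow S Q n x u * Q' (R u) w)"
    by (intro sum.cong refl) (simp add: lump[OF _ Suc.prems])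
  also have "\<dots> = (\<Sum>v\<in>T. \<Sum>u\<in>{u\<in>S. R u = v}. mat_pow S Q n x u * Q' (R u) w)"
    by (rule sum.group[symmetric]) (use fS RST fT in auto)
  also have "\<dots> = (\<Sum>v\<in>T. mat_pow T Q' n (R x) v * Q' v w)"
    by (intro sum.cong refl) (auto simp: Suc.IH sum_distrib_right[symmetric])
  finally show ?case by simp
qed

lemma mp_Suc: "mat_pow S Q (Suc n) x x' = (\<Sum>w\<in>S. mat_pow S Q n x w * Q w x')"
  by simp

declare mat_pow.simps(2)[simp del]

lemma mexp_lin:
  assumes "finite S" "x' \<in> S"
  shows "(\<Sum>x\<in>S. \<mu> x * mexp S Q t x x') = (\<Sum>n. t^n / fact n * (\<Sum>x\<in>S. \<mu> x * mat_pow S Q n x x'))"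
proof -
  have "(\<Sum>x\<in>S. \<mu> x * mexp S Q t x x') = (\<Sum>x\<in>S. \<Sum>n. \<mu> x * (t ^ n / fact n * mat_pow S Q n x x'))"
    unfolding mexp_def
    by (intro sum.cong refl suminf_mult[symmetric] mexp_summable assms)
  also have "\<dots> = (\<Sum>n. \<Sum>x\<in>S. \<mu> x * (t ^ n / fact n * mat_pow S Q n x x'))"
    by (rule suminf_sum[symmetric]) (intro summable_mult mexp_summable assms)
  also have "\<dots> = (\<Sum>n. t^n / fact n * (\<Sum>x\<in>S. \<mu> x * mat_pow S Q n x x'))"
    by (simp add: sum_distrib_left mult_ac)
  finally show ?thesis .
qed

lemma mexp_lin_summable:
  assumes "finite S" "x' \<in> S"
  shows "summable (\<lambda>n. t^n / fact n * (\<Sum>x\<in>S. \<mu> x * mat_pow S Q n x x'))"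
proof -
  have "summable (\<lambda>n. \<Sum>x\<in>S. \<mu> x * (t ^ n / fact n * mat_pow S Q n x x'))"
    by (intro summable_sum summable_mult mexp_summable assms)
  then show ?thesis by (simp add: sum_distrib_left mult_ac)
qed

lemma mat_pow_0_sum:
  assumes "finite S" "x' \<in> S"
  shows "(\<Sum>x\<in>S. \<mu> x * mat_pow S Q 0 x x') = \<mu> x'"
  using assms by (simp add: if_distrib cong: if_cong)

lemma mat_pow_1: "finite S \<Longrightarrow> x \<in> S \<Longrightarrow> mat_pow S Q (Suc 0) x x' = Q x x'"
proof -
  assume "finite S" "x \<in> S"
  have "(\<Sum>w\<in>S. (if x = w then 1 else 0) * Q w x') = (\<Sum>w\<in>S. if x = w then Q w x' else 0)"
    by (rule sum.cong) auto
  then show ?thesis using \<open>finite S\<close> \<open>x \<in> S\<close> by (simp add: mp_Suc)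
qed

lemma invariant_imp_null:
  assumes fS: "finite S" and x': "x'\<in>S"
    and inv: "\<And>t. t > 0 \<Longrightarrow> (\<Sum>x\<in>S. \<mu> x * mexp S Q t x x') = \<mu> x'"
  shows "(\<Sum>x\<in>S. \<mu> x * Q x x') = 0"
proof -
  define c where "c n = (\<Sum>x\<in>S. \<mu> x * mat_pow S Q n x x')" for n
  obtain C where C: "\<And>n x. \<bar>mat_pow S Q n x x'\<bar> \<le> C^n"
    using mat_pow_bound_ex[OF fS, of Q] x' by blast
  define B where "B = (\<Sum>x\<in>S. \<bar>\<mu> x\<bar>)"
  have B0: "0 \<le> B" unfolding B_def by (simp add: sum_nonneg)
  have cb: "\<bar>c n\<bar> \<le> B * \<bar>C\<bar>^n" for n
  proof -
    have "\<bar>c n\<bar> \<le> (\<Sum>x\<in>S. \<bar>\<mu> x * mat_pow S Q n x x'\<bar>)" unfolding c_def by (rule sum_abs)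
    also have "\<dots> \<le> (\<Sum>x\<in>S. \<bar>\<mu> x\<bar> * \<bar>C\<bar>^n)"
    proof (rule sum_mono)
      fix x
      have "\<bar>mat_pow S Q n x x'\<bar> \<le> \<bar>C\<bar>^n"
        using C[of n x] by (metis abs_ge_self order.trans power_abs power_mono abs_ge_zero)
      then show "\<bar>\<mu> x * mat_pow S Q n x x'\<bar> \<le> \<bar>\<mu> x\<bar> * \<bar>C\<bar>^n"
        by (simp add: abs_mult mult_left_mono)
    qed
    also have "\<dots> = B * \<bar>C\<bar>^n" by (simp add: B_def sum_distrib_right)
    finally show ?thesis .
  qed
  define d where "d n = c (Suc n) / fact (Suc n)" for n
  have sd: "summable (\<lambda>n. d n * t^n)" for t :: real
  proof (rule summable_comparison_test[OF _ summable_mult[OF summable_exp[of "\<bar>C\<bar> * \<bar>t\<bar>"], of "B * \<bar>C\<bar>"]])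
    show "\<exists>N. \<forall>n\<ge>N. norm (d n * t ^ n) \<le> B * \<bar>C\<bar> * (inverse (fact n) * (\<bar>C\<bar> * \<bar>t\<bar>) ^ n)"
    proof (intro exI allI impI)
      fix n :: nat
      have f: "(fact n :: real) \<le> fact (Suc n)" by (rule fact_mono) simp
      have fp: "(0::real) < fact n" by simp
      have "norm (d n * t ^ n) = \<bar>c (Suc n)\<bar> / fact (Suc n) * \<bar>t\<bar>^n"
        by (simp add: d_def abs_mult power_abs)
      also have "\<dots> \<le> B * \<bar>C\<bar>^Suc n / fact n * \<bar>t\<bar>^n"
        apply (intro mult_right_mono frac_le cb)
        using B0 f fp by auto
      also have "\<dots> = B * \<bar>C\<bar> * (inverse (fact n) * (\<bar>C\<bar> * \<bar>t\<bar>) ^ n)"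
        by (simp add: power_mult_distrib divide_inverse mult_ac)
      finally show "norm (d n * t ^ n) \<le> B * \<bar>C\<bar> * (inverse (fact n) * (\<bar>C\<bar> * \<bar>t\<bar>) ^ n)" .
    qed
  qed
  define g where "g t = (\<Sum>n. d n * t^n)" for t :: real
  have split: "(\<Sum>n. t^n / fact n * c n) = c 0 + t * g t" for t
  proof -
    have sm: "summable (\<lambda>n. t^n / fact n * c n)"
      unfolding c_def by (rule mexp_lin_summable[OF fS x'])
    have "(\<Sum>n. t^Suc n / fact (Suc n) * c (Suc n)) = (\<Sum>n. t^n / fact n * c n) - c 0"
      using suminf_split_head[OF sm] by simp
    moreover have "(\<Sum>n. t^Suc n / fact (Suc n) * c (Suc n)) = t * g t"
      unfolding g_def
      by (subst suminf_mult[OF sd, symmetric]) (simp add: d_def mult_ac)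
    ultimately show ?thesis by simp
  qed
  have c0: "c 0 = \<mu> x'" unfolding c_def by (rule mat_pow_0_sum[OF fS x'])
  have gz: "g t = 0" if "t > 0" for t
    using inv[OF that] split[of t] mexp_lin[OF fS x', of \<mu> Q t] c0 that unfolding c_def by simp
  have cont: "isCont g 0" unfolding g_def by (rule isCont_powser_converges_everywhere) (rule sd)
  have "(g \<longlongrightarrow> g 0) (at_right 0)"
    using cont unfolding isCont_def by (rule tendsto_mono[OF at_le, rotated]) simp
  moreover have "eventually (\<lambda>t. g t = 0) (at_right (0::real))"
    using eventually_at_right_less[of "0::real"] by eventually_elim (simp add: gz)
  ultimately have "((\<lambda>_. 0) \<longlongrightarrow> g 0) (at_right (0::real))"
    by (rule Lim_transform_eventually)
  then have "g 0 = 0" using tendsto_unique[OF trivial_limit_at_right_real] tendsto_const by metis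
  moreover have "g 0 = d 0" unfolding g_def using powser_zero[of d] by simp
  moreover have "d 0 = (\<Sum>x\<in>S. \<mu> x * Q x x')"
    unfolding d_def c_def using mat_pow_1[OF fS] by (simp cong: sum.cong)
  ultimately show ?thesis by simp
qed

lemma finite_subseq_conv:
  fixes f :: "nat \<Rightarrow> 'a \<Rightarrow> real"
  assumes "finite F" "\<And>n x. x\<in>F \<Longrightarrow> \<bar>f n x\<bar> \<le> B"
  shows "\<exists>r. strict_mono r \<and> (\<forall>x\<in>F. convergent (\<lambda>n. f (r n) x))"
  using assms
proof (induction F rule: finite_induct)
  case empty
  then show ?case by (auto intro: exI[of _ id] simp: strict_mono_def)
next
  case (insert a F)
  obtain r where r: "strict_mono r" "\<forall>x\<in>F. convergent (\<lambda>n. f (r n) x)" using insert by auto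
  obtain s where s: "strict_mono s" "monoseq (\<lambda>n. f (r (s n)) a)"
    using seq_monosub[of "\<lambda>n. f (r n) a"] by auto
  have "Bseq (\<lambda>n. f (r (s n)) a)" using insert.prems by (intro BseqI'[where K=B]) auto
  hence ca: "convergent (\<lambda>n. f (r (s n)) a)" using s(2) Bseq_monoseq_convergent by blast
  have rs: "strict_mono (\<lambda>n. r (s n))" using strict_mono_o[OF r(1) s(1)] by (simp add: o_def)
  have "convergent (\<lambda>n. f (r (s n)) x)" if "x \<in> F" for x
    using convergent_subseq_convergent[OF r(2)[rule_format, OF that] s(1)] by (simp add: o_def)
  then show ?case using rs ca by (intro exI[of _ "\<lambda>n. r (s n)"]) auto
qed

locale gen =
  fixes S :: "'s set" and Q :: "'s \<Rightarrow> 's \<Rightarrow> real"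
  assumes fin: "finite S"
    and offdiag: "\<And>x x'. x\<in>S \<Longrightarrow> x'\<in>S \<Longrightarrow> x\<noteq>x' \<Longrightarrow> 0 \<le> Q x x'"
    and rows: "\<And>x. x\<in>S \<Longrightarrow> (\<Sum>x'\<in>S. Q x x') = 0"
begin

lemma left_null_pow:
  assumes null: "\<And>x'. x'\<in>S \<Longrightarrow> (\<Sum>x\<in>S. \<mu> x * Q x x') = 0" and "x'\<in>S"
  shows "(\<Sum>x\<in>S. \<mu> x * mat_pow S Q (Suc n) x x') = 0"
  using assms(2)
proof (induction n arbitrary: x')
  case 0
  then show ?case using null[OF 0] by (simp add: mat_pow_1 fin cong: sum.cong)
next
  case (Suc n)
  have "(\<Sum>x\<in>S. \<mu> x * mat_pow S Q (Suc (Suc n)) x x')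
     = (\<Sum>w\<in>S. (\<Sum>x\<in>S. \<mu> x * mat_pow S Q (Suc n) x w) * Q w x')"
    unfolding mp_Suc[of S Q "Suc n"] sum_distrib_left sum_distrib_right mult.assoc
    by (rule sum.swap)
  also have "\<dots> = 0" using Suc.IH by simp
  finally show ?case .
qed

lemma mexp_left_null:
  assumes null: "\<And>x'. x'\<in>S \<Longrightarrow> (\<Sum>x\<in>S. \<mu> x * Q x x') = 0" and "x'\<in>S"
  shows "(\<Sum>x\<in>S. \<mu> x * mexp S Q t x x') = \<mu> x'"
proof -
  have "(\<lambda>n. t^n / fact n * (\<Sum>x\<in>S. \<mu> x * mat_pow S Q n x x')) = (\<lambda>n. if n = 0 then \<mu> x' else 0)"
  proof
    fix n show "t^n / fact n * (\<Sum>x\<in>S. \<mu> x * mat_pow S Q n x x') = (if n = 0 then \<mu> x' else 0)"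
      using left_null_pow[OF null assms(2)] mat_pow_0_sum[OF fin assms(2)] by (cases n) auto
  qed
  then show ?thesis using mexp_lin[OF fin assms(2)] sums_single[of 0 "\<lambda>_. \<mu> x'"]
    by (simp add: sums_iff)
qed

lemma exists_null:
  assumes "S \<noteq> {}"
  shows "\<exists>\<mu>. (\<forall>x\<in>S. 0 \<le> \<mu> x) \<and> (\<Sum>x\<in>S. \<mu> x) = 1 \<and> (\<forall>x'\<in>S. (\<Sum>x\<in>S. \<mu> x * Q x x') = 0)"
proof -
  define L where "L = 1 + (\<Sum>x\<in>S. \<Sum>x'\<in>S. \<bar>Q x x'\<bar>)"
  have L1: "1 \<le> L" unfolding L_def by (simp add: sum_nonneg)
  have Qb: "\<bar>Q x x'\<bar> \<le> L - 1" if "x\<in>S" "x'\<in>S" for x x'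
  proof -
    have "\<bar>Q x x'\<bar> \<le> (\<Sum>x'\<in>S. \<bar>Q x x'\<bar>)"
      using that fin by (intro member_le_sum) auto
    also have "\<dots> \<le> (\<Sum>x\<in>S. \<Sum>x'\<in>S. \<bar>Q x x'\<bar>)"
      using that fin by (intro member_le_sum[where f="\<lambda>x. \<Sum>x'\<in>S. \<bar>Q x x'\<bar>"]) (auto intro: sum_nonneg)
    finally show ?thesis unfolding L_def by simp
  qed
  define K where "K x x' = (if x = x' then 1 else 0) + Q x x' / L" for x x'
  have Kn: "0 \<le> K x x'" if "x\<in>S" "x'\<in>S" for x x'
  proof (cases "x = x'")
    case True
    have "\<bar>Q x x'\<bar> / L \<le> 1" using Qb[OF that] L1 by (simp add: divide_le_eq)
    have "- L \<le> Q x x'" using Qb[OF that] by (simp add: abs_le_iff)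
    hence "-1 \<le> Q x x' / L" using L1 by (simp add: le_divide_eq)
    then show ?thesis using True by (simp add: K_def)
  next
    case False
    then show ?thesis using offdiag[OF that False] L1 by (simp add: K_def)
  qed
  have Kr: "(\<Sum>x'\<in>S. K x x') = 1" if "x\<in>S" for x
    using that fin rows[OF that] by (simp add: K_def sum.distrib sum_divide_distrib[symmetric])
  have Pn: "0 \<le> mat_pow S K n x x'" if "x\<in>S" "x'\<in>S" for n x x'
    using that(2)
  proof (induction n arbitrary: x')
    case 0 then show ?case by simp
  next
    case (Suc n) then show ?case by (simp add: mp_Suc Kn sum_nonneg)
  qed
  have Pr: "(\<Sum>x'\<in>S. mat_pow S K n x x') = 1" if "x\<in>S" for n x
  proof (induction n)
    case 0 then show ?case using that fin by simp
  next
    case (Suc n)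
    have "(\<Sum>x'\<in>S. mat_pow S K (Suc n) x x') = (\<Sum>w\<in>S. mat_pow S K n x w * (\<Sum>x'\<in>S. K w x'))"
      unfolding mp_Suc sum_distrib_left by (rule sum.swap)
    also have "\<dots> = 1" using Kr Suc by simp
    finally show ?case .
  qed
  have Pb: "mat_pow S K n x x' \<le> 1" if "x\<in>S" "x'\<in>S" for n x x'
  proof -
    have "mat_pow S K n x x' \<le> (\<Sum>x'\<in>S. mat_pow S K n x x')"
      using that fin Pn by (intro member_le_sum) auto
    then show ?thesis using Pr[OF that(1)] by simp
  qed
  obtain x0 where x0: "x0 \<in> S" using assms by auto
  define A where "A N x' = (\<Sum>n<Suc N. mat_pow S K n x0 x') / real (Suc N)" for N x'
  have A0: "0 \<le> A N x'" if "x'\<in>S" for N x'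
    unfolding A_def using Pn[OF x0 that] by (simp add: sum_nonneg)
  have A1: "A N x' \<le> 1" if "x'\<in>S" for N x'
  proof -
    have "(\<Sum>n<Suc N. mat_pow S K n x0 x') \<le> (\<Sum>n<Suc N. 1)"
      by (rule sum_mono) (rule Pb[OF x0 that])
    then show ?thesis unfolding A_def by (simp add: divide_le_eq)
  qed
  have Asum: "(\<Sum>x\<in>S. A N x) = 1" for N
  proof -
    have "(\<Sum>x\<in>S. A N x) = (\<Sum>n<Suc N. \<Sum>x\<in>S. mat_pow S K n x0 x) / real (Suc N)"
      unfolding A_def sum_divide_distrib[symmetric]
      by (rule arg_cong[where f="\<lambda>s. s / real (Suc N)"], rule sum.swap)
    also have "\<dots> = 1" using Pr[OF x0] by simp
    finally show ?thesis .
  qed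
  obtain r where r: "strict_mono r" "\<forall>x\<in>S. convergent (\<lambda>N. A (r N) x)"
    using finite_subseq_conv[OF fin, of A 1] A0 A1 by fastforce
  define \<mu> where "\<mu> x = lim (\<lambda>N. A (r N) x)" for x
  have lim: "(\<lambda>N. A (r N) x) \<longlonglongrightarrow> \<mu> x" if "x\<in>S" for x
    using r(2) that unfolding \<mu>_def by (simp add: convergent_LIMSEQ_iff)
  have mu0: "0 \<le> \<mu> x" if "x\<in>S" for x
    by (rule LIMSEQ_le_const[OF lim[OF that]]) (use A0 that in auto)
  have "(\<lambda>N. \<Sum>x\<in>S. A (r N) x) \<longlonglongrightarrow> (\<Sum>x\<in>S. \<mu> x)"
    by (rule tendsto_sum) (rule lim)
  then have mu1: "(\<Sum>x\<in>S. \<mu> x) = 1" using Asum by (simp add: LIMSEQ_const_iff)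
  define D where "D N x' = (\<Sum>x\<in>S. A N x * K x x') - A N x'" for N x'
  have Deq: "D N x' = (mat_pow S K (Suc N) x0 x' - mat_pow S K 0 x0 x') / real (Suc N)" for N x'
  proof -
    have "(\<Sum>x\<in>S. A N x * K x x') = (\<Sum>x\<in>S. \<Sum>n<Suc N. mat_pow S K n x0 x * K x x') / real (Suc N)"
      unfolding A_def sum_divide_distrib[where A=S] by (intro sum.cong refl) (simp add: sum_distrib_right distrib_right)
    also have "\<dots> = (\<Sum>n<Suc N. \<Sum>x\<in>S. mat_pow S K n x0 x * K x x') / real (Suc N)"
      by (rule arg_cong[where f="\<lambda>s. s / real (Suc N)"], rule sum.swap)
    also have "\<dots> = (\<Sum>n<Suc N. mat_pow S K (Suc n) x0 x') / real (Suc N)"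
      by (simp only: mp_Suc)
    finally have "D N x' = (\<Sum>n<Suc N. mat_pow S K (Suc n) x0 x' - mat_pow S K n x0 x') / real (Suc N)"
      unfolding D_def A_def by (simp add: sum_subtractf diff_divide_distrib)
    then show ?thesis by (simp add: sum_lessThan_telescope[of "\<lambda>n. mat_pow S K n x0 x'"])
  qed
  have Dlim0: "(\<lambda>N. D N x') \<longlonglongrightarrow> 0" if "x'\<in>S" for x'
  proof (rule Lim_null_comparison)
    show "\<forall>\<^sub>F N in sequentially. norm (D N x') \<le> 2 * inverse (real (Suc N))"
    proof (intro always_eventually allI)
      fix N
      have "\<bar>mat_pow S K (Suc N) x0 x' - mat_pow S K 0 x0 x'\<bar> \<le> 2"
        using Pn[OF x0 that, of "Suc N"] Pb[OF x0 that, of "Suc N"] Pn[OF x0 that, of 0] Pb[OF x0 that, of 0]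
        by linarith
      then show "norm (D N x') \<le> 2 * inverse (real (Suc N))"
        unfolding Deq by (simp add: divide_inverse abs_mult mult_right_mono)
    qed
    show "(\<lambda>N. 2 * inverse (real (Suc N))) \<longlonglongrightarrow> 0"
      using tendsto_mult_right_zero[OF LIMSEQ_inverse_real_of_nat, of 2] by simp
  qed
  have muK: "(\<Sum>x\<in>S. \<mu> x * K x x') = \<mu> x'" if "x'\<in>S" for x'
  proof -
    have "(\<lambda>N. D (r N) x') \<longlonglongrightarrow> 0"
      using LIMSEQ_subseq_LIMSEQ[OF Dlim0[OF that] r(1)] by (simp add: o_def)
    moreover have "(\<lambda>N. D (r N) x') \<longlonglongrightarrow> (\<Sum>x\<in>S. \<mu> x * K x x') - \<mu> x'"
      unfolding D_def by (intro tendsto_diff tendsto_sum tendsto_mult_right lim that)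
    ultimately show ?thesis using LIMSEQ_unique by fastforce
  qed
  have "(\<Sum>x\<in>S. \<mu> x * Q x x') = 0" if "x'\<in>S" for x'
  proof -
    have "(\<Sum>x\<in>S. \<mu> x * K x x') = (\<Sum>x\<in>S. (if x = x' then \<mu> x else 0) + \<mu> x * Q x x' / L)"
      by (rule sum.cong) (auto simp: K_def distrib_left)
    also have "\<dots> = (\<Sum>x\<in>S. (if x = x' then \<mu> x else 0)) + (\<Sum>x\<in>S. \<mu> x * Q x x') / L"
      by (simp only: sum.distrib sum_divide_distrib)
    finally have "(\<Sum>x\<in>S. \<mu> x * K x x') = (\<Sum>x\<in>S. (if x = x' then \<mu> x else 0)) + (\<Sum>x\<in>S. \<mu> x * Q x x') / L" .
    then show ?thesis using muK[OF that] that fin L1 by simp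
  qed
  then show ?thesis using mu0 mu1 by blast
qed

definition E where "E = {(a,b). a\<in>S \<and> b\<in>S \<and> a\<noteq>b \<and> 0 < Q a b}"

lemma pos_spread:
  assumes nn: "\<forall>x\<in>S. 0 \<le> \<mu> x" and null: "\<forall>x'\<in>S. (\<Sum>x\<in>S. \<mu> x * Q x x') = 0"
    and "(a,b) \<in> E\<^sup>*" "0 < \<mu> a"
  shows "0 < \<mu> b"
  using assms(3,4)
proof (induction rule: rtrancl_induct)
  case base then show ?case .
next
  case (step b c)
  then have bc: "b\<in>S" "c\<in>S" "b\<noteq>c" "0 < Q b c" "0 < \<mu> b" by (auto simp: E_def)
  have "0 = (\<Sum>x\<in>S. \<mu> x * Q x c)" using null bc by auto
  also have "\<dots> = \<mu> c * Q c c + (\<Sum>x\<in>S-{c}. \<mu> x * Q x c)"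
    by (rule sum.remove[OF fin bc(2)])
  finally have eq: "0 = \<mu> c * Q c c + (\<Sum>x\<in>S-{c}. \<mu> x * Q x c)" .
  have "\<mu> b * Q b c \<le> (\<Sum>x\<in>S-{c}. \<mu> x * Q x c)"
    using bc fin nn offdiag by (intro member_le_sum) auto
  moreover have "0 < \<mu> b * Q b c" using bc by simp
  ultimately have "\<mu> c * Q c c < 0" using eq by linarith
  then have "\<mu> c \<noteq> 0" by auto
  moreover have "0 \<le> \<mu> c" using nn bc by auto
  ultimately show ?case by (simp add: order_le_neq_trans)
qed

lemma unique_null:
  assumes irr: "\<And>a b. a\<in>S \<Longrightarrow> b\<in>S \<Longrightarrow> (a,b) \<in> E\<^sup>*"
    and mn: "\<forall>x\<in>S. 0 \<le> \<mu> x" and m1: "(\<Sum>x\<in>S. \<mu> x) = 1" and mq: "\<forall>x'\<in>S. (\<Sum>x\<in>S. \<mu> x * Q x x') = 0"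
    and nn: "\<forall>x\<in>S. 0 \<le> \<nu> x" and n1: "(\<Sum>x\<in>S. \<nu> x) = 1" and nq: "\<forall>x'\<in>S. (\<Sum>x\<in>S. \<nu> x * Q x x') = 0"
  shows "\<forall>x\<in>S. \<mu> x = \<nu> x"
proof -
  obtain a where a: "a \<in> S" "0 < \<mu> a"
  proof -
    have "\<exists>a\<in>S. 0 < \<mu> a"
    proof (rule ccontr)
      assume "\<not> ?thesis"
      then have "\<forall>x\<in>S. \<mu> x = 0" using mn by force
      then show False using m1 by simp
    qed
    then show ?thesis using that by blast
  qed
  have mpos: "0 < \<mu> x" if "x\<in>S" for x using pos_spread[OF mn mq irr[OF a(1) that] a(2)] .
  have Sne: "S \<noteq> {}" using a by auto
  define f where "f x = \<nu> x / \<mu> x" for x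
  define c where "c = Min (f ` S)"
  have "c \<in> f ` S" unfolding c_def using fin Sne by (intro Min_in) auto
  then obtain x1 where x1: "x1 \<in> S" "f x1 = c" by auto
  have cle: "c \<le> f x" if "x\<in>S" for x unfolding c_def using fin that by simp
  define \<sigma> where "\<sigma> x = \<nu> x - c * \<mu> x" for x
  have sn: "\<forall>x\<in>S. 0 \<le> \<sigma> x"
  proof
    fix x assume x: "x\<in>S"
    have "c * \<mu> x \<le> f x * \<mu> x" using cle[OF x] mpos[OF x] by (simp add: mult_right_mono)
    also have "\<dots> = \<nu> x" using mpos[OF x] by (simp add: f_def)
    finally show "0 \<le> \<sigma> x" by (simp add: \<sigma>_def)
  qed
  have sq: "\<forall>x'\<in>S. (\<Sum>x\<in>S. \<sigma> x * Q x x') = 0"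
  proof
    fix x' assume x': "x'\<in>S"
    have "(\<Sum>x\<in>S. \<sigma> x * Q x x') = (\<Sum>x\<in>S. \<nu> x * Q x x') - c * (\<Sum>x\<in>S. \<mu> x * Q x x')"
      by (simp add: \<sigma>_def left_diff_distrib sum_subtractf sum_distrib_left mult.assoc)
    then show "(\<Sum>x\<in>S. \<sigma> x * Q x x') = 0" using mq nq x' by simp
  qed
  have s1: "\<sigma> x1 = 0" using x1 mpos[OF x1(1)] by (auto simp: \<sigma>_def f_def divide_eq_eq)
  have s0: "\<sigma> x = 0" if "x\<in>S" for x
  proof (rule ccontr)
    assume "\<sigma> x \<noteq> 0"
    moreover have "0 \<le> \<sigma> x" using sn that by auto
    ultimately have "0 < \<sigma> x" by (simp add: order_le_neq_trans)
    then have "0 < \<sigma> x1" using pos_spread[OF sn sq irr[OF that x1(1)]] by blast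
    then show False using s1 by simp
  qed
  then have nu: "\<nu> x = c * \<mu> x" if "x\<in>S" for x using that by (simp add: \<sigma>_def)
  have "(\<Sum>x\<in>S. \<nu> x) = (\<Sum>x\<in>S. c * \<mu> x)" by (rule sum.cong[OF refl nu])
  then have "1 = c * 1" using n1 m1 by (simp add: sum_distrib_left[symmetric])
  then show ?thesis using nu by simp
qed

end

lemma mexp_lump:
  assumes fS: "finite S" and fT: "finite T" and RST: "R ` S \<subseteq> T"
    and lump: "\<And>x w. x \<in> S \<Longrightarrow> w \<in> T \<Longrightarrow> (\<Sum>x'\<in>{x'\<in>S. R x' = w}. Q x x') = Q' (R x) w"
    and "x \<in> S" "w \<in> T"
  shows "(\<Sum>x'\<in>{x'\<in>S. R x' = w}. mexp S Q t x x') = mexp T Q' t (R x) w"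
proof -
  have "(\<Sum>x'\<in>{x'\<in>S. R x' = w}. mexp S Q t x x') = (\<Sum>n. \<Sum>x'\<in>{x'\<in>S. R x' = w}. t ^ n / fact n * mat_pow S Q n x x')"
    unfolding mexp_def by (rule suminf_sum[symmetric]) (intro mexp_summable fS, simp)
  also have "\<dots> = (\<Sum>n. t ^ n / fact n * mat_pow T Q' n (R x) w)"
    by (rule arg_cong[where f=suminf], rule ext)
      (simp only: sum_distrib_left[symmetric] mat_pow_lump[where Q=Q and Q'=Q' and R=R, OF fS fT RST lump assms(5,6)])
  finally show ?thesis unfolding mexp_def .
qed

lemma mexp_zero:
  assumes "\<And>u. u \<in> T \<Longrightarrow> Q' u w = 0" "v \<noteq> w"
  shows "mexp T Q' t v w = 0"
proof -
  have "mat_pow T Q' n v w = 0" for n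
    using assms by (cases n) (auto simp: mp_Suc)
  then show ?thesis by (simp add: mexp_def)
qed

lemma pmf_map_sum:
  assumes "finite S" "set_pmf \<pi> \<subseteq> S"
  shows "pmf (map_pmf R \<pi>) v = (\<Sum>x\<in>{x\<in>S. R x = v}. pmf \<pi> x)"
proof -
  have "pmf (map_pmf R \<pi>) v = measure \<pi> (R -` {v} \<inter> set_pmf \<pi>)"
    by (simp add: pmf_map measure_Int_set_pmf)
  also have "R -` {v} \<inter> set_pmf \<pi> = {x\<in>S. R x = v} \<inter> set_pmf \<pi>" using assms by auto
  also have "measure \<pi> \<dots> = measure \<pi> {x\<in>S. R x = v}" by (rule measure_Int_set_pmf)
  also have "\<dots> = (\<Sum>x\<in>{x\<in>S. R x = v}. pmf \<pi> x)" using assms by (simp add: measure_measure_pmf_finite)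
  finally show ?thesis .
qed

definition ginv :: "'s set \<Rightarrow> ('s \<Rightarrow> 's \<Rightarrow> real) \<Rightarrow> 's pmf \<Rightarrow> bool" where
  "ginv S Q \<mu> \<longleftrightarrow> set_pmf \<mu> \<subseteq> S \<and>
     (\<forall>t\<ge>0. \<forall>P'\<in>S. (\<Sum>P\<in>S. pmf \<mu> P * mexp S Q t P P') = pmf \<mu> P')"

lemma lump_inv:
  assumes fS: "finite S" and fT: "finite T" and RST: "R ` S \<subseteq> T"
    and lump: "\<And>x w. x \<in> S \<Longrightarrow> w \<in> T \<Longrightarrow> (\<Sum>x'\<in>{x'\<in>S. R x' = w}. Q x x') = Q' (R x) w"
    and inv: "ginv S Q \<mu>"
  shows "ginv T Q' (map_pmf R \<mu>)"
  unfolding ginv_def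
proof (intro conjI allI impI ballI)
  have sS: "set_pmf \<mu> \<subseteq> S" using inv by (simp add: ginv_def)
  then show "set_pmf (map_pmf R \<mu>) \<subseteq> T" using RST by auto
  fix t :: real and w assume t: "0 \<le> t" and w: "w \<in> T"
  have "(\<Sum>v\<in>T. pmf (map_pmf R \<mu>) v * mexp T Q' t v w)
      = (\<Sum>v\<in>T. \<Sum>x\<in>{x\<in>S. R x = v}. pmf \<mu> x * mexp T Q' t (R x) w)"
    by (simp add: pmf_map_sum[OF fS sS] sum_distrib_right)
  also have "\<dots> = (\<Sum>x\<in>S. pmf \<mu> x * mexp T Q' t (R x) w)"
    by (rule sum.group[OF fS fT RST])
  also have "\<dots> = (\<Sum>x\<in>S. \<Sum>x'\<in>{x'\<in>S. R x' = w}. pmf \<mu> x * mexp S Q t x x')"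
    by (intro sum.cong refl) (simp add: sum_distrib_left[symmetric] mexp_lump[where Q=Q and Q'=Q' and R=R, OF fS fT RST lump _ w])
  also have "\<dots> = (\<Sum>x'\<in>{x'\<in>S. R x' = w}. \<Sum>x\<in>S. pmf \<mu> x * mexp S Q t x x')"
    by (rule sum.swap)
  also have "\<dots> = (\<Sum>x'\<in>{x'\<in>S. R x' = w}. pmf \<mu> x')"
    using inv t unfolding ginv_def by (intro sum.cong refl) auto
  also have "\<dots> = pmf (map_pmf R \<mu>) w" by (simp add: pmf_map_sum[OF fS sS])
  finally show "(\<Sum>v\<in>T. pmf (map_pmf R \<mu>) v * mexp T Q' t v w) = pmf (map_pmf R \<mu>) w" .
qed

context gen
begin

lemma ginv_iff:
  "ginv S Q \<mu> \<longleftrightarrow> set_pmf \<mu> \<subseteq> S \<and> (\<forall>x'\<in>S. (\<Sum>x\<in>S. pmf \<mu> x * Q x x') = 0)"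
proof
  assume "ginv S Q \<mu>"
  then show "set_pmf \<mu> \<subseteq> S \<and> (\<forall>x'\<in>S. (\<Sum>x\<in>S. pmf \<mu> x * Q x x') = 0)"
    unfolding ginv_def using invariant_imp_null[OF fin] by (metis less_imp_le)
next
  assume "set_pmf \<mu> \<subseteq> S \<and> (\<forall>x'\<in>S. (\<Sum>x\<in>S. pmf \<mu> x * Q x x') = 0)"
  then show "ginv S Q \<mu>" unfolding ginv_def using mexp_left_null by blast
qed

lemma ex1_ginv:
  assumes irr: "\<And>a b. a\<in>S \<Longrightarrow> b\<in>S \<Longrightarrow> (a,b) \<in> E\<^sup>*" and ne: "S \<noteq> {}"
  shows "\<exists>!\<mu>. ginv S Q \<mu>"
proof -
  obtain f where f: "\<forall>x\<in>S. 0 \<le> f x" "(\<Sum>x\<in>S. f x) = 1" "\<forall>x'\<in>S. (\<Sum>x\<in>S. f x * Q x x') = 0"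
    using exists_null[OF ne] by blast
  define g where "g x = (if x \<in> S then f x else 0)" for x
  have g0: "\<And>x. 0 \<le> g x" using f by (simp add: g_def)
  have gi: "(\<integral>\<^sup>+x. ennreal (g x) \<partial>count_space UNIV) = 1"
  proof -
    have "(\<integral>\<^sup>+x. ennreal (g x) \<partial>count_space UNIV) = (\<Sum>x\<in>S. ennreal (g x))"
      by (rule nn_integral_count_space'[OF fin]) (auto simp: g_def)
    also have "\<dots> = ennreal (\<Sum>x\<in>S. g x)" using g0 by (simp add: sum_ennreal)
    also have "(\<Sum>x\<in>S. g x) = 1" using f by (simp add: g_def)
    finally show ?thesis by simp
  qed
  define \<mu> where "\<mu> = embed_pmf g"
  have pmu: "pmf \<mu> x = g x" for x unfolding \<mu>_def by (rule pmf_embed_pmf[OF g0 gi])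
  have "ginv S Q \<mu>"
    unfolding ginv_iff
  proof
    show "set_pmf \<mu> \<subseteq> S" by (auto simp: set_pmf_iff pmu g_def split: if_splits)
    show "\<forall>x'\<in>S. (\<Sum>x\<in>S. pmf \<mu> x * Q x x') = 0" using f(3) by (simp add: pmu g_def)
  qed
  moreover have "\<nu> = \<mu>" if "ginv S Q \<nu>" "ginv S Q \<mu>" for \<nu> \<mu>
  proof (rule pmf_eqI)
    fix i
    have s1: "set_pmf \<nu> \<subseteq> S" "set_pmf \<mu> \<subseteq> S" using that by (auto simp: ginv_def)
    have "\<forall>x\<in>S. pmf \<nu> x = pmf \<mu> x"
      apply (rule unique_null[OF irr])
      using that s1 by (auto simp: ginv_iff sum_pmf_eq_1[OF fin])
    then show "pmf \<nu> i = pmf \<mu> i" using s1 by (metis set_pmf_iff subsetD)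
  qed
  ultimately show ?thesis by blast
qed

end

lemma path_lump:
  assumes fS: "finite S" and fT: "finite T" and RST: "R ` S \<subseteq> T"
    and lump: "\<And>x w. x \<in> S \<Longrightarrow> w \<in> T \<Longrightarrow> (\<Sum>x'\<in>{x'\<in>S. R x' = w}. Q x x') = Q' (R x) w"
    and zero: "\<And>v w t. v \<in> T \<Longrightarrow> w \<notin> T \<Longrightarrow> mexp T Q' t v w = 0"
    and "x0 \<in> S"
  shows "(\<Sum>xs\<in>{xs. length xs = length ts \<and> set xs \<subseteq> S \<and> map R xs = ws}. path_prob (mexp S Q) x0 t0 ts xs)
         = path_prob (mexp T Q') (R x0) t0 ts ws"
  using assms(6)
proof (induction ts arbitrary: ws x0 t0)
  case Nil
  have "{xs. length xs = length ([]::real list) \<and> set xs \<subseteq> S \<and> map R xs = ws} = (if ws = [] then {[]} else {})"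
    by auto
  then show ?case by (cases ws) auto
next
  case (Cons t ts)
  show ?case
  proof (cases ws)
    case Nil
    then show ?thesis by simp
  next
    case (Cons w ws')
    define L where "L = {xs. length xs = length ts \<and> set xs \<subseteq> S \<and> map R xs = ws'}"
    have fL: "finite L"
      by (rule finite_subset[OF _ finite_lists_length_eq[OF fS, of "length ts"]]) (auto simp: L_def)
    have eq: "{xs. length xs = length (t # ts) \<and> set xs \<subseteq> S \<and> map R xs = ws}
        = (\<lambda>(x, xs). x # xs) ` ({x\<in>S. R x = w} \<times> L)"
      unfolding Cons L_def
      by (auto simp: length_Suc_conv image_iff)
    have inj: "inj_on (\<lambda>(x, xs). x # xs) ({x\<in>S. R x = w} \<times> L)"
      by (auto simp: inj_on_def)
    have "(\<Sum>xs\<in>{xs. length xs = length (t # ts) \<and> set xs \<subseteq> S \<and> map R xs = ws}. path_prob (mexp S Q) x0 t0 (t # ts) xs)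
        = (\<Sum>(x, xs)\<in>{x\<in>S. R x = w} \<times> L. path_prob (mexp S Q) x0 t0 (t # ts) (x # xs))"
      unfolding eq by (subst sum.reindex[OF inj]) (simp add: case_prod_unfold)
    also have "\<dots> = (\<Sum>x\<in>{x\<in>S. R x = w}. \<Sum>xs\<in>L. mexp S Q (t - t0) x0 x * path_prob (mexp S Q) x t ts xs)"
      by (subst sum.cartesian_product[symmetric]) simp
    also have "\<dots> = (\<Sum>x\<in>{x\<in>S. R x = w}. mexp S Q (t - t0) x0 x * path_prob (mexp T Q') w t ts ws')"
      by (intro sum.cong refl) (auto simp: sum_distrib_left[symmetric] L_def Cons.IH)
    also have "\<dots> = path_prob (mexp T Q') (R x0) t0 (t # ts) ws"
    proof (cases "w \<in> T")
      case True
      then show ?thesis unfolding Cons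
        by (simp add: sum_distrib_right[symmetric] mexp_lump[where Q=Q and Q'=Q' and R=R, OF fS fT RST lump Cons.prems True])
    next
      case False
      hence e: "{x\<in>S. R x = w} = {}" using RST by auto
      have "mexp T Q' (t - t0) (R x0) w = 0" using zero[OF _ False] RST Cons.prems by auto
      then show ?thesis unfolding Cons e by simp
    qed
    finally show ?thesis .
  qed
qed

lemma part_mem: "P \<in> partitions_of z \<longleftrightarrow> partition_on z P"
  by (simp add: partitions_of_def)

lemma part_finite: "finite z \<Longrightarrow> finite (partitions_of z)"
  by (simp add: partitions_of_def finitely_many_partition_on)

lemma Rest_part:
  assumes "y \<subseteq> z" "P \<in> partitions_of z"
  shows "Rest y P \<in> partitions_of y"
proof -
  have "partition_on (y \<inter> z) ((\<inter>) y ` P - {{}})"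
    using assms by (intro partition_on_restrict) (simp add: part_mem)
  moreover have "(\<inter>) y ` P = (\<lambda>B. B \<inter> y) ` P" by (auto simp: Int_commute)
  moreover have "y \<inter> z = y" using assms by auto
  ultimately show ?thesis by (simp add: part_mem Rest_def)
qed

lemma disc_part: "(\<lambda>a. {a}) ` z \<in> partitions_of z"
  by (simp add: part_mem partition_on_singletons)

lemma part_block_eq:
  assumes "partition_on z P" "A \<in> P" "B \<in> P" "x \<in> A" "x \<in> B"
  shows "A = B"
  using assms partition_onD2[OF assms(1)] by (auto simp: disjoint_def)

lemma part_block_ne: "partition_on z P \<Longrightarrow> A \<in> P \<Longrightarrow> A \<noteq> {}"
  using partition_onD3 by blast

lemma part_block_sub: "partition_on z P \<Longrightarrow> A \<in> P \<Longrightarrow> A \<subseteq> z"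
  using partition_onD1 by blast

lemma part_finite_P: "finite z \<Longrightarrow> partition_on z P \<Longrightarrow> finite P"
  by (rule finite_elements)

lemma part_int_inj:
  assumes "partition_on z P"
  shows "inj_on (\<lambda>C. C \<inter> y) {C\<in>P. C \<inter> y \<noteq> {}}"
proof (rule inj_onI)
  fix A B assume "A \<in> {C\<in>P. C \<inter> y \<noteq> {}}" "B \<in> {C\<in>P. C \<inter> y \<noteq> {}}" "A \<inter> y = B \<inter> y"
  then obtain x where "x \<in> A" "x \<in> B" "A \<in> P" "B \<in> P" by blast
  then show "A = B" using part_block_eq[OF assms] by blast
qed

lemma Rest_mem: "A' \<in> Rest y P \<longleftrightarrow> (\<exists>A\<in>P. A' = A \<inter> y) \<and> A' \<noteq> {}"
  by (auto simp: Rest_def)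

definition Pairs :: "'a set set \<Rightarrow> 'a set set set" where
  "Pairs P = {{A, B} | A B. A \<in> P \<and> B \<in> P \<and> A \<noteq> B}"

definition mg :: "'a set set \<Rightarrow> 'a set set \<Rightarrow> 'a set set" where
  "mg P p = insert (\<Union>p) (P - p)"

lemma finite_Pairs: "finite P \<Longrightarrow> finite (Pairs P)"
  by (rule finite_subset[of _ "Pow P"]) (auto simp: Pairs_def)

lemma PairsE:
  assumes "p \<in> Pairs P"
  obtains A B where "p = {A, B}" "A \<in> P" "B \<in> P" "A \<noteq> B"
  using assms by (auto simp: Pairs_def)

lemma PairsI: "A \<in> P \<Longrightarrow> B \<in> P \<Longrightarrow> A \<noteq> B \<Longrightarrow> {A, B} \<in> Pairs P"
  unfolding Pairs_def by auto

lemma merge_rate_alt: "merge_rate P P' = real (card {p\<in>Pairs P. mg P p = P'})"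
proof -
  have "{{A, B} | A B. A \<in> P \<and> B \<in> P \<and> A \<noteq> B \<and> P' = insert (A \<union> B) (P - {A, B})}
        = {p\<in>Pairs P. mg P p = P'}"
    unfolding Pairs_def mg_def by auto
  then show ?thesis by (simp add: merge_rate_def)
qed

lemma mg_part:
  assumes "partition_on z P" "p \<in> Pairs P"
  shows "mg P p \<in> partitions_of z"
proof -
  obtain A B where p: "p = {A, B}" "A \<in> P" "B \<in> P" "A \<noteq> B" using assms(2) by (auto simp: Pairs_def)
  have dis: "disjoint P" using partition_onD2[OF assms(1)] .
  show ?thesis unfolding part_mem mg_def p
  proof (rule partition_onI)
    show "\<Union>(insert (\<Union>{A, B}) (P - {A, B})) = z"
      using partition_onD1[OF assms(1)] p by auto
    show "{} \<notin> insert (\<Union>{A, B}) (P - {A, B})"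
      using partition_onD3[OF assms(1)] p by auto
    fix C D assume "C \<in> insert (\<Union>{A, B}) (P - {A, B})" "D \<in> insert (\<Union>{A, B}) (P - {A, B})" "C \<noteq> D"
    then show "disjnt C D" using dis p unfolding disjoint_def disjnt_def by auto
  qed
qed

lemma Rest_mg_triv:
  assumes "partition_on z P" "A \<in> P" "B \<in> P" "A \<noteq> B" "A \<inter> y = {}"
  shows "Rest y (mg P {A, B}) = Rest y P"
  using assms unfolding Rest_def mg_def by auto

lemma Rest_mg:
  assumes P: "partition_on z P" and "A \<in> P" "B \<in> P" "A \<noteq> B" "A \<inter> y \<noteq> {}" "B \<inter> y \<noteq> {}"
  shows "Rest y (mg P {A, B}) = mg (Rest y P) {A \<inter> y, B \<inter> y}"
    and "{A \<inter> y, B \<inter> y} \<in> Pairs (Rest y P)"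
proof -
  have inj: "C \<inter> y = D \<inter> y \<Longrightarrow> C \<in> P \<Longrightarrow> D \<in> P \<Longrightarrow> C \<inter> y \<noteq> {} \<Longrightarrow> C = D" for C D
    using part_int_inj[OF P, of y] unfolding inj_on_def by blast
  have AB: "A \<inter> y \<noteq> B \<inter> y" using inj assms by blast
  show "{A \<inter> y, B \<inter> y} \<in> Pairs (Rest y P)"
    unfolding Pairs_def using assms AB by (auto simp: Rest_def)
  show "Rest y (mg P {A, B}) = mg (Rest y P) {A \<inter> y, B \<inter> y}"
    unfolding Rest_def mg_def
  proof (intro equalityI subsetI)
    fix X assume X: "X \<in> (\<lambda>B. B \<inter> y) ` insert (\<Union>{A, B}) (P - {A, B}) - {{}}"
    then show "X \<in> insert (\<Union>{A \<inter> y, B \<inter> y}) ((\<lambda>B. B \<inter> y) ` P - {{}} - {A \<inter> y, B \<inter> y})"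
      using inj assms by auto
  next
    fix X assume X: "X \<in> insert (\<Union>{A \<inter> y, B \<inter> y}) ((\<lambda>B. B \<inter> y) ` P - {{}} - {A \<inter> y, B \<inter> y})"
    then show "X \<in> (\<lambda>B. B \<inter> y) ` insert (\<Union>{A, B}) (P - {A, B}) - {{}}"
      using assms by auto
  qed
qed

lemma merge_lump:
  assumes yz: "y \<subseteq> z" and fz: "finite z" and P: "P \<in> partitions_of z" and wne: "w \<noteq> Rest y P"
  shows "(\<Sum>P'\<in>{P'\<in>partitions_of z. Rest y P' = w}. merge_rate P P') = merge_rate (Rest y P) w"
proof -
  have Pp: "partition_on z P" using P by (simp add: part_mem)
  have fP: "finite P" using part_finite_P[OF fz Pp] .
  define SL where "SL = {p\<in>Pairs P. Rest y (mg P p) = w}"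
  define SR where "SR = {p'\<in>Pairs (Rest y P). mg (Rest y P) p' = w}"
  have "(\<Sum>P'\<in>{P'\<in>partitions_of z. Rest y P' = w}. merge_rate P P')
      = (\<Sum>P'\<in>{P'\<in>partitions_of z. Rest y P' = w}. \<Sum>p\<in>{p\<in>SL. mg P p = P'}. 1)"
  proof (intro sum.cong refl)
    fix P' assume "P' \<in> {P'\<in>partitions_of z. Rest y P' = w}"
    then have "{p\<in>SL. mg P p = P'} = {p\<in>Pairs P. mg P p = P'}" by (auto simp: SL_def)
    then show "merge_rate P P' = (\<Sum>p\<in>{p\<in>SL. mg P p = P'}. 1)" by (simp add: merge_rate_alt)
  qed
  also have "\<dots> = (\<Sum>p\<in>SL. 1)"
  proof (rule sum.group)
    show "finite SL" unfolding SL_def using finite_Pairs[OF fP] by simp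
    show "finite {P'\<in>partitions_of z. Rest y P' = w}" using part_finite[OF fz] by simp
    show "mg P ` SL \<subseteq> {P'\<in>partitions_of z. Rest y P' = w}" using mg_part[OF Pp] unfolding SL_def by blast
  qed
  also have "\<dots> = real (card SL)" by simp
  also have "card SL = card SR"
  proof -
    have SLd: "\<exists>A B. p = {A, B} \<and> A \<in> P \<and> B \<in> P \<and> A \<noteq> B \<and> A \<inter> y \<noteq> {} \<and> B \<inter> y \<noteq> {}" if "p \<in> SL" for p
    proof -
      have "p \<in> Pairs P" using that unfolding SL_def by blast
      then obtain A B where p: "p = {A, B}" "A \<in> P" "B \<in> P" "A \<noteq> B" by (rule PairsE)
      have "A \<inter> y \<noteq> {}"
      proof
        assume "A \<inter> y = {}"
        then have "Rest y (mg P {A, B}) = Rest y P" using Rest_mg_triv[OF Pp p(2-4)] by blast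
        then show False using that wne p(1) unfolding SL_def by auto
      qed
      moreover have "B \<inter> y \<noteq> {}"
      proof
        assume "B \<inter> y = {}"
        then have "Rest y (mg P {B, A}) = Rest y P" using Rest_mg_triv[OF Pp p(3,2) p(4)[symmetric]] by blast
        moreover have "{B, A} = p" using p by blast
        ultimately show False using that wne unfolding SL_def by auto
      qed
      ultimately show ?thesis using p by metis
    qed
    have "bij_betw ((`) (\<lambda>C. C \<inter> y)) SL SR"
    proof (rule bij_betw_imageI)
      have sub: "SL \<subseteq> Pow {C\<in>P. C \<inter> y \<noteq> {}}"
      proof
        fix p assume "p \<in> SL"
        then obtain A B where "p = {A, B} \<and> A \<in> P \<and> B \<in> P \<and> A \<noteq> B \<and> A \<inter> y \<noteq> {} \<and> B \<inter> y \<noteq> {}"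
          using SLd by metis
        then show "p \<in> Pow {C\<in>P. C \<inter> y \<noteq> {}}" by simp
      qed
      show "inj_on ((`) (\<lambda>C. C \<inter> y)) SL"
        by (rule inj_on_subset[OF inj_on_image_Pow[OF part_int_inj[OF Pp]] sub])
      show "(`) (\<lambda>C. C \<inter> y) ` SL = SR"
      proof (intro equalityI subsetI)
        fix q assume "q \<in> (`) (\<lambda>C. C \<inter> y) ` SL"
        then obtain p where p: "p \<in> SL" "q = (\<lambda>C. C \<inter> y) ` p" by blast
        obtain A B where AB: "p = {A, B}" "A \<in> P" "B \<in> P" "A \<noteq> B" "A \<inter> y \<noteq> {}" "B \<inter> y \<noteq> {}"
          using SLd[OF p(1)] by metis
        have qe: "q = {A \<inter> y, B \<inter> y}" using p(2) AB(1) by simp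
        have "Rest y (mg P p) = w" using p(1) unfolding SL_def by blast
        then show "q \<in> SR" using Rest_mg[OF Pp AB(2-6)] unfolding SR_def qe AB(1) by simp
      next
        fix q assume "q \<in> SR"
        then have "q \<in> Pairs (Rest y P)" "mg (Rest y P) q = w" unfolding SR_def by blast+
        then obtain A' B' where q: "q = {A', B'}" "A' \<in> Rest y P" "B' \<in> Rest y P" "A' \<noteq> B'" "mg (Rest y P) q = w"
          by (metis PairsE)
        obtain A where A: "A \<in> P" "A' = A \<inter> y" "A' \<noteq> {}" using q(2) unfolding Rest_mem by blast
        obtain B where B: "B \<in> P" "B' = B \<inter> y" "B' \<noteq> {}" using q(3) unfolding Rest_mem by blast
        have "A \<noteq> B" using A B q by auto
        have "{A, B} \<in> Pairs P" using A B \<open>A \<noteq> B\<close> by (simp add: PairsI)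
        moreover have "Rest y (mg P {A, B}) = w" using Rest_mg(1)[OF Pp A(1) B(1) \<open>A \<noteq> B\<close>] A B q by simp
        ultimately have "{A, B} \<in> SL" unfolding SL_def by blast
        moreover have "q = (\<lambda>C. C \<inter> y) ` {A, B}" using q A B by simp
        ultimately show "q \<in> (`) (\<lambda>C. C \<inter> y) ` SL" by blast
      qed
    qed
    then show ?thesis by (rule bij_betw_same_card)
  qed
  also have "real (card SR) = merge_rate (Rest y P) w" by (simp add: merge_rate_alt SR_def)
  finally show ?thesis .
qed

definition cpairs :: "real set \<Rightarrow> (real \<times> real) set" where
  "cpairs C = {(a, b). a \<in> C \<and> b \<in> C \<and> a < b \<and> \<not> (\<exists>c\<in>C. a < c \<and> c < b)}"

lemma cpairs_finite: "finite C \<Longrightarrow> finite (cpairs C)"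
  by (rule finite_subset[of _ "C \<times> C"]) (auto simp: cpairs_def)

lemma telescope:
  assumes "finite C" "C \<noteq> {}"
  shows "(\<Sum>(a, b)\<in>cpairs C. b - a) = Max C - Min C"
proof -
  have "C \<noteq> {} \<longrightarrow> (\<Sum>(a, b)\<in>cpairs C. b - a) = Max C - Min C"
    using assms(1)
  proof (induction C rule: finite_linorder_max_induct)
    case empty
    then show ?case by simp
  next
    case (insert b C)
    show ?case
    proof (cases "C = {}")
      case True
      then have "cpairs (insert b C) = {}" by (auto simp: cpairs_def)
      then show ?thesis using True by simp
    next
      case False
      have bC: "b \<notin> C" using insert by auto
      have MC: "Max C \<in> C" "Max C < b" using False insert by auto
      have eq: "cpairs (insert b C) = insert (Max C, b) (cpairs C)"
      proof (intro equalityI subsetI)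
        fix p assume p: "p \<in> cpairs (insert b C)"
        obtain u v where uv: "p = (u, v)" by fastforce
        show "p \<in> insert (Max C, b) (cpairs C)"
        proof (cases "v = b")
          case True
          then have "u \<in> C" using p uv bC by (auto simp: cpairs_def)
          moreover have "\<not> (u < Max C)" using p uv True MC by (auto simp: cpairs_def)
          ultimately have "u = Max C" using insert.hyps(1) by (meson Max_ge antisym_conv1 linorder_not_less)
          then show ?thesis using uv True by simp
        next
          case False
          then have "u \<in> C" "v \<in> C" using p uv insert.hyps(2) by (auto simp: cpairs_def)
          then show ?thesis using p uv by (auto simp: cpairs_def)
        qed
      next
        fix p assume p: "p \<in> insert (Max C, b) (cpairs C)"
        show "p \<in> cpairs (insert b C)"
        proof (cases "p = (Max C, b)")
          case True
          have "\<not> (\<exists>c\<in>insert b C. Max C < c \<and> c < b)"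
            using insert.hyps(1) by (auto simp: not_less)
          then show ?thesis using True MC by (auto simp: cpairs_def)
        next
          case False
          then have "p \<in> cpairs C" using p by simp
          then show ?thesis using insert.hyps(2) by (auto simp: cpairs_def)
        qed
      qed
      have nin: "(Max C, b) \<notin> cpairs C" using bC by (auto simp: cpairs_def)
      have "(\<Sum>(a, b)\<in>cpairs (insert b C). b - a) = (b - Max C) + (\<Sum>(a, b)\<in>cpairs C. b - a)"
        unfolding eq using nin cpairs_finite[OF insert.hyps(1)] by simp
      also have "\<dots> = (b - Max C) + (Max C - Min C)" using insert.IH False by simp
      also have "\<dots> = Max (insert b C) - Min (insert b C)"
        using insert.hyps False MC by (simp add: Max_insert Min_insert max_def min_def)
          (smt (verit) Min_le insert.hyps(1) MC(1))
      finally show ?thesis by simp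
    qed
  qed
  then show ?thesis using assms by blast
qed

definition Trip :: "real set set \<Rightarrow> (real set \<times> real \<times> real) set" where
  "Trip P = {(A, a, b). A \<in> P \<and> a \<in> A \<and> b \<in> A \<and> a < b \<and> \<not> (\<exists>c\<in>A. a < c \<and> c < b)}"

definition sp :: "real set set \<Rightarrow> real set \<times> real \<times> real \<Rightarrow> real set set" where
  "sp P t = (case t of (A, a, b) \<Rightarrow> insert {x\<in>A. x \<le> a} (insert {x\<in>A. b \<le> x} (P - {A})))"

definition gap :: "real set \<times> real \<times> real \<Rightarrow> real" where
  "gap t = (case t of (A, a, b) \<Rightarrow> b - a)"

lemma split_rate_alt: "split_rate \<rho> P P' = (\<Sum>t\<in>{t\<in>Trip P. sp P t = P'}. \<rho> * gap t)"
proof -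
  have "{(A, a, b). A \<in> P \<and> a \<in> A \<and> b \<in> A \<and> a < b \<and>
        \<not> (\<exists>c\<in>A. a < c \<and> c < b) \<and>
        P' = insert {x\<in>A. x \<le> a} (insert {x\<in>A. b \<le> x} (P - {A}))} = {t\<in>Trip P. sp P t = P'}"
    by (auto simp: Trip_def sp_def)
  then show ?thesis unfolding split_rate_def by (simp add: gap_def case_prod_unfold)
qed

lemma finite_Trip:
  assumes "finite z" "partition_on z P"
  shows "finite (Trip P)"
proof (rule finite_subset)
  show "Trip P \<subseteq> P \<times> z \<times> z" using partition_onD1[OF assms(2)] by (auto simp: Trip_def)
  show "finite (P \<times> z \<times> z)" using assms part_finite_P by auto
qed

lemma part_replace:
  assumes Pp: "partition_on z P" and A: "A \<in> P" and XY: "X \<union> Y = A" "X \<inter> Y = {}" "X \<noteq> {}" "Y \<noteq> {}"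
  shows "partition_on z (insert X (insert Y (P - {A})))"
proof (rule partition_onI)
  have dis: "disjoint P" using partition_onD2[OF Pp] .
  have z: "z = \<Union>P" using partition_onD1[OF Pp] .
  show "\<Union>(insert X (insert Y (P - {A}))) = z"
  proof -
    have "\<Union>(insert X (insert Y (P - {A}))) = A \<union> \<Union>(P - {A})" using XY by auto
    also have "\<dots> = \<Union>P" using A by auto
    finally show ?thesis using z by simp
  qed
  show "{} \<notin> insert X (insert Y (P - {A}))" using partition_onD3[OF Pp] XY by auto
  have dA: "D \<inter> A = {}" if "D \<in> P - {A}" for D
    using disjointD[OF dis, of D A] that A by auto
  fix C D assume C: "C \<in> insert X (insert Y (P - {A}))" and D: "D \<in> insert X (insert Y (P - {A}))" and CD: "C \<noteq> D"
  show "disjnt C D"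
  proof (cases "C \<in> {X, Y}")
    case True
    then have CA: "C \<subseteq> A" using XY by auto
    show ?thesis
    proof (cases "D \<in> {X, Y}")
      case True
      then show ?thesis using \<open>C \<in> {X, Y}\<close> CD XY(2) by (auto simp: disjnt_def)
    next
      case False
      then have "D \<in> P - {A}" using D by simp
      then show ?thesis using dA CA by (auto simp: disjnt_def)
    qed
  next
    case False
    then have CP: "C \<in> P - {A}" using C by simp
    show ?thesis
    proof (cases "D \<in> {X, Y}")
      case True
      then have "D \<subseteq> A" using XY by auto
      then show ?thesis using dA[OF CP] by (auto simp: disjnt_def)
    next
      case False
      then have "D \<in> P - {A}" using D by simp
      then show ?thesis using disjointD[OF dis, of C D] CP CD by (auto simp: disjnt_def)
    qed
  qed
qed

lemma sp_part:
  assumes Pp: "partition_on z P" and t: "t \<in> Trip P"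
  shows "sp P t \<in> partitions_of z"
proof -
  obtain A a b where t': "t = (A, a, b)" "A \<in> P" "a \<in> A" "b \<in> A" "a < b" "\<not> (\<exists>c\<in>A. a < c \<and> c < b)"
    using t by (auto simp: Trip_def)
  have "partition_on z (insert {x\<in>A. x \<le> a} (insert {x\<in>A. b \<le> x} (P - {A})))"
  proof (rule part_replace[OF Pp t'(2)])
    show "{x \<in> A. x \<le> a} \<union> {x \<in> A. b \<le> x} = A" using t' by (auto simp: not_less)
    show "{x \<in> A. x \<le> a} \<inter> {x \<in> A. b \<le> x} = {}" using t' by auto
    show "{x \<in> A. x \<le> a} \<noteq> {}" using t' by auto
    show "{x \<in> A. b \<le> x} \<noteq> {}" using t' by auto
  qed
  then show ?thesis by (simp add: part_mem sp_def t')
qed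

lemma Trip_D:
  assumes "(A, a, b) \<in> Trip P"
  shows "A \<in> P" "a \<in> A" "b \<in> A" "a < b" "\<And>c. c \<in> A \<Longrightarrow> a < c \<Longrightarrow> c < b \<Longrightarrow> False"
  using assms by (auto simp: Trip_def)

lemma img_P_split: "A \<in> P \<Longrightarrow> (\<lambda>B. B \<inter> y) ` P = insert (A \<inter> y) ((\<lambda>B. B \<inter> y) ` (P - {A}))"
  by (metis image_insert insert_Diff)

lemma Rest_sp_expand:
  "Rest y (sp P (A, a, b)) = insert ({x\<in>A. x \<le> a} \<inter> y) (insert ({x\<in>A. b \<le> x} \<inter> y) ((\<lambda>B. B \<inter> y) ` (P - {A}))) - {{}}"
  by (simp add: Rest_def sp_def)

lemma Rest_sp_triv:
  assumes t: "(A, a, b) \<in> Trip P"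
    and LU: "{c\<in>A \<inter> y. c \<le> a} = {} \<or> {c\<in>A \<inter> y. b \<le> c} = {}"
  shows "Rest y (sp P (A, a, b)) = Rest y P"
proof -
  note T = Trip_D[OF t]
  have RP: "Rest y P = insert (A \<inter> y) ((\<lambda>B. B \<inter> y) ` (P - {A})) - {{}}"
    unfolding Rest_def using img_P_split[OF T(1)] by simp
  from LU show ?thesis
  proof
    assume L: "{c\<in>A \<inter> y. c \<le> a} = {}"
    have e1: "{x\<in>A. x \<le> a} \<inter> y = {}" using L by auto
    have e2: "{x\<in>A. b \<le> x} \<inter> y = A \<inter> y"
    proof (intro equalityI subsetI)
      fix x assume x: "x \<in> A \<inter> y"
      then have "\<not> x \<le> a" using L by auto
      then have "b \<le> x" using T(5)[of x] x by force
      then show "x \<in> {x\<in>A. b \<le> x} \<inter> y" using x by auto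
    qed auto
    show ?thesis unfolding Rest_sp_expand RP e1 e2 by simp
  next
    assume U: "{c\<in>A \<inter> y. b \<le> c} = {}"
    have e2: "{x\<in>A. b \<le> x} \<inter> y = {}" using U by auto
    have e1: "{x\<in>A. x \<le> a} \<inter> y = A \<inter> y"
    proof (intro equalityI subsetI)
      fix x assume x: "x \<in> A \<inter> y"
      then have "\<not> b \<le> x" using U by auto
      then have "x \<le> a" using T(5)[of x] x by force
      then show "x \<in> {x\<in>A. x \<le> a} \<inter> y" using x by auto
    qed auto
    have "insert (A \<inter> y) (insert {} S) - {{}} = insert (A \<inter> y) S - {{}}" for S :: "real set set"
      by auto
    then show ?thesis unfolding Rest_sp_expand RP e1 e2 by simp
  qed
qed

lemma Rest_sp:
  assumes Pp: "partition_on z P" and fz: "finite z" and t: "(A, a, b) \<in> Trip P"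
    and L: "{c\<in>A \<inter> y. c \<le> a} \<noteq> {}" and U: "{c\<in>A \<inter> y. b \<le> c} \<noteq> {}"
  shows "(A \<inter> y, Max {c\<in>A \<inter> y. c \<le> a}, Min {c\<in>A \<inter> y. b \<le> c}) \<in> Trip (Rest y P)"
    and "Rest y (sp P (A, a, b)) = sp (Rest y P) (A \<inter> y, Max {c\<in>A \<inter> y. c \<le> a}, Min {c\<in>A \<inter> y. b \<le> c})"
proof -
  note T = Trip_D[OF t]
  define a' where "a' = Max {c\<in>A \<inter> y. c \<le> a}"
  define b' where "b' = Min {c\<in>A \<inter> y. b \<le> c}"
  have fA: "finite A" using part_block_sub[OF Pp T(1)] fz finite_subset by blast
  have fL: "finite {c\<in>A \<inter> y. c \<le> a}" using fA by simp
  have fU: "finite {c\<in>A \<inter> y. b \<le> c}" using fA by simp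
  have a'L: "a' \<in> {c\<in>A \<inter> y. c \<le> a}" unfolding a'_def using Max_in[OF fL L] .
  have b'U: "b' \<in> {c\<in>A \<inter> y. b \<le> c}" unfolding b'_def using Min_in[OF fU U] .
  have a'max: "c \<le> a'" if "c \<in> A \<inter> y" "c \<le> a" for c unfolding a'_def using fL that by simp
  have b'min: "b' \<le> c" if "c \<in> A \<inter> y" "b \<le> c" for c unfolding b'_def using fU that by simp
  have between: "c \<le> a \<or> b \<le> c" if "c \<in> A" for c using T(5)[of c] that by force
  have e1: "{x\<in>A. x \<le> a} \<inter> y = {x\<in>A \<inter> y. x \<le> a'}"
    using a'L a'max by auto
  have e2: "{x\<in>A. b \<le> x} \<inter> y = {x\<in>A \<inter> y. b' \<le> x}"
    using b'U b'min by auto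
  have ne1: "{x\<in>A \<inter> y. x \<le> a'} \<noteq> {}" using a'L by auto
  have ne2: "{x\<in>A \<inter> y. b' \<le> x} \<noteq> {}" using b'U by auto
  have inj: "C \<inter> y = D \<inter> y \<Longrightarrow> C \<in> P \<Longrightarrow> D \<in> P \<Longrightarrow> C \<inter> y \<noteq> {} \<Longrightarrow> C = D" for C D
    using part_int_inj[OF Pp, of y] unfolding inj_on_def by blast
  have e3: "(\<lambda>B. B \<inter> y) ` (P - {A}) - {{}} = Rest y P - {A \<inter> y}"
  proof (intro equalityI subsetI)
    fix X assume "X \<in> (\<lambda>B. B \<inter> y) ` (P - {A}) - {{}}"
    then obtain B where B: "B \<in> P" "B \<noteq> A" "X = B \<inter> y" "X \<noteq> {}" by auto
    then have "X \<noteq> A \<inter> y" using inj[of B A] T(1) by auto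
    then show "X \<in> Rest y P - {A \<inter> y}" using B by (auto simp: Rest_def)
  next
    fix X assume "X \<in> Rest y P - {A \<inter> y}"
    then obtain B where B: "B \<in> P" "X = B \<inter> y" "X \<noteq> {}" "X \<noteq> A \<inter> y" by (auto simp: Rest_def)
    then have "B \<noteq> A" by auto
    then show "X \<in> (\<lambda>B. B \<inter> y) ` (P - {A}) - {{}}" using B by auto
  qed
  have "Rest y (sp P (A, a, b)) = insert {x\<in>A \<inter> y. x \<le> a'} (insert {x\<in>A \<inter> y. b' \<le> x} ((\<lambda>B. B \<inter> y) ` (P - {A}) - {{}}))"
    unfolding Rest_sp_expand e1 e2 using ne1 ne2 by auto
  also have "\<dots> = sp (Rest y P) (A \<inter> y, a', b')" unfolding e3 sp_def by simp
  finally show "Rest y (sp P (A, a, b)) = sp (Rest y P) (A \<inter> y, Max {c\<in>A \<inter> y. c \<le> a}, Min {c\<in>A \<inter> y. b \<le> c})"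
    unfolding a'_def b'_def .
  have "A \<inter> y \<in> Rest y P" using T(1) a'L by (auto simp: Rest_def)
  moreover have "a' \<in> A \<inter> y" "b' \<in> A \<inter> y" using a'L b'U by auto
  moreover have "a' < b'" using a'L b'U T(4) by auto
  moreover have "\<not> (\<exists>c\<in>A \<inter> y. a' < c \<and> c < b')"
  proof
    assume "\<exists>c\<in>A \<inter> y. a' < c \<and> c < b'"
    then obtain c where c: "c \<in> A \<inter> y" "a' < c" "c < b'" by blast
    show False
    proof (cases "c \<le> a")
      case True then show False using a'max[OF c(1)] c by auto
    next
      case False
      then have "b \<le> c" using between c(1) by auto
      then show False using b'min[OF c(1)] c by auto
    qed
  qed
  ultimately show "(A \<inter> y, Max {c\<in>A \<inter> y. c \<le> a}, Min {c\<in>A \<inter> y. b \<le> c}) \<in> Trip (Rest y P)"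
    unfolding a'_def b'_def Trip_def by blast
qed

lemma split_lump:
  assumes yz: "y \<subseteq> z" and fz: "finite z" and P: "P \<in> partitions_of z" and wne: "w \<noteq> Rest y P"
  shows "(\<Sum>P'\<in>{P'\<in>partitions_of z. Rest y P' = w}. split_rate \<rho> P P') = split_rate \<rho> (Rest y P) w"
proof -
  have Pp: "partition_on z P" using P by (simp add: part_mem)
  have RPp: "partition_on y (Rest y P)" using Rest_part[OF yz P] by (simp add: part_mem)
  have fy: "finite y" using fz yz finite_subset by blast
  define \<phi> where "\<phi> t = (case t of (A, a, b) \<Rightarrow> (A \<inter> y, Max {c\<in>A \<inter> y. c \<le> a}, Min {c\<in>A \<inter> y. b \<le> c}))" for t :: "real set \<times> real \<times> real"
  define SL where "SL = {t\<in>Trip P. Rest y (sp P t) = w}"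
  define SR where "SR = {t'\<in>Trip (Rest y P). sp (Rest y P) t' = w}"
  have fSL: "finite SL" unfolding SL_def using finite_Trip[OF fz Pp] by simp
  have fSR: "finite SR" unfolding SR_def using finite_Trip[OF fy RPp] by simp
  have inj: "C \<inter> y = D \<inter> y \<Longrightarrow> C \<in> P \<Longrightarrow> D \<in> P \<Longrightarrow> C \<inter> y \<noteq> {} \<Longrightarrow> C = D" for C D
    using part_int_inj[OF Pp, of y] unfolding inj_on_def by blast
  have SL_LU: "{c\<in>A \<inter> y. c \<le> a} \<noteq> {} \<and> {c\<in>A \<inter> y. b \<le> c} \<noteq> {}" if "(A, a, b) \<in> SL" for A a b
  proof (rule ccontr)
    assume "\<not> ?thesis"
    then have "Rest y (sp P (A, a, b)) = Rest y P" using Rest_sp_triv[of A a b P y] that unfolding SL_def by auto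
    then show False using that wne unfolding SL_def by auto
  qed
  have "(\<Sum>P'\<in>{P'\<in>partitions_of z. Rest y P' = w}. split_rate \<rho> P P')
      = (\<Sum>P'\<in>{P'\<in>partitions_of z. Rest y P' = w}. \<Sum>t\<in>{t\<in>SL. sp P t = P'}. \<rho> * gap t)"
  proof (intro sum.cong refl)
    fix P' assume "P' \<in> {P'\<in>partitions_of z. Rest y P' = w}"
    then have "{t\<in>SL. sp P t = P'} = {t\<in>Trip P. sp P t = P'}" by (auto simp: SL_def)
    then show "split_rate \<rho> P P' = (\<Sum>t\<in>{t\<in>SL. sp P t = P'}. \<rho> * gap t)" by (simp add: split_rate_alt)
  qed
  also have "\<dots> = (\<Sum>t\<in>SL. \<rho> * gap t)"
  proof (rule sum.group[OF fSL])
    show "finite {P'\<in>partitions_of z. Rest y P' = w}" using part_finite[OF fz] by simp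
    show "sp P ` SL \<subseteq> {P'\<in>partitions_of z. Rest y P' = w}" using sp_part[OF Pp] unfolding SL_def by blast
  qed
  also have "\<dots> = (\<Sum>t'\<in>SR. \<Sum>t\<in>{t\<in>SL. \<phi> t = t'}. \<rho> * gap t)"
  proof (rule sum.group[OF fSL fSR, symmetric])
    show "\<phi> ` SL \<subseteq> SR"
    proof
      fix t' assume "t' \<in> \<phi> ` SL"
      then obtain A a b where t: "(A, a, b) \<in> SL" "t' = \<phi> (A, a, b)" by auto
      have tT: "(A, a, b) \<in> Trip P" using t(1) unfolding SL_def by blast
      note LU = SL_LU[OF t(1)]
      have "Rest y (sp P (A, a, b)) = w" using t(1) unfolding SL_def by blast
      then show "t' \<in> SR" unfolding SR_def t(2) \<phi>_def prod.case
        using Rest_sp[OF Pp fz tT conjunct1[OF LU] conjunct2[OF LU]] by simp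
    qed
  qed
  also have "\<dots> = (\<Sum>t'\<in>SR. \<rho> * gap t')"
  proof (intro sum.cong refl)
    fix t' assume t': "t' \<in> SR"
    obtain A' a' b' where t'e: "t' = (A', a', b')" by (cases t') auto
    have t'T: "(A', a', b') \<in> Trip (Rest y P)" "sp (Rest y P) (A', a', b') = w" using t' t'e unfolding SR_def by auto
    note T' = Trip_D[OF t'T(1)]
    obtain Ah where Ah: "Ah \<in> P" "A' = Ah \<inter> y" "A' \<noteq> {}" using T'(1) unfolding Rest_mem by blast
    have fAh: "finite Ah" using part_block_sub[OF Pp Ah(1)] fz finite_subset by blast
    define C where "C = {c\<in>Ah. a' \<le> c \<and> c \<le> b'}"
    have fC: "finite C" using fAh by (simp add: C_def)
    have a'C: "a' \<in> C" and b'C: "b' \<in> C" using T' Ah by (auto simp: C_def)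
    have MaxC: "Max C = b'" by (rule Max_eqI[OF fC _ b'C]) (auto simp: C_def)
    have MinC: "Min C = a'" by (rule Min_eqI[OF fC _ a'C]) (auto simp: C_def)
    have consec': "\<not> (a' < c \<and> c < b')" if "c \<in> A'" for c using T'(5)[OF that] by blast
    have fib: "{t\<in>SL. \<phi> t = t'} = (\<lambda>(a, b). (Ah, a, b)) ` cpairs C"
    proof (intro equalityI subsetI)
      fix t assume t: "t \<in> {t\<in>SL. \<phi> t = t'}"
      obtain A a b where te: "t = (A, a, b)" by (cases t) auto
      have tSL: "(A, a, b) \<in> SL" using t te by simp
      have tT: "(A, a, b) \<in> Trip P" using tSL unfolding SL_def by blast
      note T = Trip_D[OF tT]
      note LU = SL_LU[OF tSL]
      have fA: "finite A" using part_block_sub[OF Pp T(1)] fz finite_subset by blast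
      have ph: "A \<inter> y = A'" "Max {c\<in>A \<inter> y. c \<le> a} = a'" "Min {c\<in>A \<inter> y. b \<le> c} = b'"
        using t te t'e by (auto simp: \<phi>_def)
      have AAh: "A = Ah" using inj[of A Ah] ph(1) Ah T(1) by auto
      have "Max {c\<in>A \<inter> y. c \<le> a} \<in> {c\<in>A \<inter> y. c \<le> a}"
        by (rule Max_in) (use fA conjunct1[OF LU] in auto)
      then have "a' \<in> {c\<in>A \<inter> y. c \<le> a}" using ph(2) by simp
      then have aa: "a' \<le> a" by simp
      have "Min {c\<in>A \<inter> y. b \<le> c} \<in> {c\<in>A \<inter> y. b \<le> c}"
        by (rule Min_in) (use fA conjunct2[OF LU] in auto)
      then have "b' \<in> {c\<in>A \<inter> y. b \<le> c}" using ph(3) by simp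
      then have bb: "b \<le> b'" by simp
      have "(a, b) \<in> cpairs C"
        unfolding cpairs_def C_def using T aa bb AAh by auto
      then show "t \<in> (\<lambda>(a, b). (Ah, a, b)) ` cpairs C" using te AAh by auto
    next
      fix t assume "t \<in> (\<lambda>(a, b). (Ah, a, b)) ` cpairs C"
      then obtain a b where ab: "(a, b) \<in> cpairs C" "t = (Ah, a, b)" by auto
      have abC: "a \<in> C" "b \<in> C" "a < b" "\<And>c. c \<in> C \<Longrightarrow> a < c \<Longrightarrow> c < b \<Longrightarrow> False"
        using ab(1) unfolding cpairs_def by auto
      have aAh: "a \<in> Ah" "a' \<le> a" "b \<in> Ah" "b \<le> b'" using abC(1,2) by (auto simp: C_def)
      have nc: "\<not> (\<exists>c\<in>Ah. a < c \<and> c < b)"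
      proof
        assume "\<exists>c\<in>Ah. a < c \<and> c < b"
        then obtain c where c: "c \<in> Ah" "a < c" "c < b" by blast
        then have "c \<in> C" using aAh by (auto simp: C_def)
        then show False using abC(4) c by blast
      qed
      have tT: "(Ah, a, b) \<in> Trip P" unfolding Trip_def using Ah(1) aAh abC(3) nc by blast
      have fL: "finite {c\<in>Ah \<inter> y. c \<le> a}" using fAh by simp
      have fU: "finite {c\<in>Ah \<inter> y. b \<le> c}" using fAh by simp
      have a'A': "a' \<in> Ah \<inter> y" "b' \<in> Ah \<inter> y" using T'(2,3) Ah(2) by auto
      have HMa: "Max {c\<in>Ah \<inter> y. c \<le> a} = a'"
      proof (rule Max_eqI[OF fL])
        show "a' \<in> {c\<in>Ah \<inter> y. c \<le> a}" using a'A' aAh by auto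
        fix c assume c: "c \<in> {c\<in>Ah \<inter> y. c \<le> a}"
        show "c \<le> a'"
        proof (rule ccontr)
          assume "\<not> c \<le> a'"
          then have "a' < c" "c < b'" using c aAh abC(3) by auto
          then show False using consec'[of c] c Ah(2) by auto
        qed
      qed
      have HMu: "Min {c\<in>Ah \<inter> y. b \<le> c} = b'"
      proof (rule Min_eqI[OF fU])
        show "b' \<in> {c\<in>Ah \<inter> y. b \<le> c}" using a'A' aAh by auto
        fix c assume c: "c \<in> {c\<in>Ah \<inter> y. b \<le> c}"
        show "b' \<le> c"
        proof (rule ccontr)
          assume "\<not> b' \<le> c"
          then have "c < b'" "a' < c" using c aAh abC(3) by auto
          then show False using consec'[of c] c Ah(2) by auto
        qed
      qed
      have L: "{c\<in>Ah \<inter> y. c \<le> a} \<noteq> {}" and U: "{c\<in>Ah \<inter> y. b \<le> c} \<noteq> {}"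
        using a'A' aAh by auto
      have "Rest y (sp P (Ah, a, b)) = sp (Rest y P) (A', a', b')"
        using Rest_sp(2)[OF Pp fz tT L U] HMa HMu Ah(2) by simp
      then have "(Ah, a, b) \<in> SL" using tT t'T(2) unfolding SL_def by simp
      moreover have "\<phi> (Ah, a, b) = t'" using HMa HMu Ah(2) t'e by (simp add: \<phi>_def)
      ultimately show "t \<in> {t\<in>SL. \<phi> t = t'}" using ab(2) by simp
    qed
    have injf: "inj_on (\<lambda>(a, b). (Ah, a, b)) (cpairs C)" by (auto simp: inj_on_def)
    have "(\<Sum>t\<in>{t\<in>SL. \<phi> t = t'}. \<rho> * gap t) = (\<Sum>(a, b)\<in>cpairs C. \<rho> * (b - a))"
      unfolding fib by (subst sum.reindex[OF injf]) (simp add: gap_def case_prod_unfold)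
    also have "\<dots> = \<rho> * (\<Sum>(a, b)\<in>cpairs C. b - a)"
      by (simp add: sum_distrib_left case_prod_unfold)
    also have "\<dots> = \<rho> * (b' - a')" using telescope[OF fC] a'C MaxC MinC by auto
    also have "\<dots> = \<rho> * gap t'" by (simp add: gap_def t'e)
    finally show "(\<Sum>t\<in>{t\<in>SL. \<phi> t = t'}. \<rho> * gap t) = \<rho> * gap t'" .
  qed
  also have "\<dots> = split_rate \<rho> (Rest y P) w" by (simp add: split_rate_alt SR_def)
  finally show ?thesis .
qed

lemma gap_pos: "t \<in> Trip P \<Longrightarrow> 0 < gap t"
  by (auto simp: Trip_def gap_def)

lemma jump_rate_targets:
  assumes "P \<in> partitions_of z" "P' \<notin> partitions_of z"
  shows "jump_rate \<rho> P P' = 0"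
proof -
  have Pp: "partition_on z P" using assms by (simp add: part_mem)
  have e1: "{p\<in>Pairs P. mg P p = P'} = {}" using mg_part[OF Pp] assms(2) by blast
  have e2: "{t\<in>Trip P. sp P t = P'} = {}" using sp_part[OF Pp] assms(2) by blast
  show ?thesis unfolding jump_rate_def merge_rate_alt split_rate_alt e1 e2 by simp
qed

lemma jump_rate_nonneg:
  assumes "0 < \<rho>" "finite z" "P \<in> partitions_of z"
  shows "0 \<le> merge_rate P P'" "0 \<le> split_rate \<rho> P P'" "0 \<le> jump_rate \<rho> P P'"
proof -
  show m: "0 \<le> merge_rate P P'" by (simp add: merge_rate_def)
  show s: "0 \<le> split_rate \<rho> P P'" unfolding split_rate_alt
    using assms gap_pos by (intro sum_nonneg) (auto intro: less_imp_le)
  show "0 \<le> jump_rate \<rho> P P'" using m s by (simp add: jump_rate_def)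
qed

lemma gen_arg:
  assumes "0 < \<rho>" "finite z"
  shows "gen (partitions_of z) (arg_gen \<rho> z)"
proof
  show "finite (partitions_of z)" using part_finite[OF assms(2)] .
  fix x x' assume "x \<in> partitions_of z" "x' \<in> partitions_of z" "x \<noteq> x'"
  then show "0 \<le> arg_gen \<rho> z x x'" using jump_rate_nonneg[OF assms] by (simp add: arg_gen_def)
next
  fix x assume x: "x \<in> partitions_of z"
  have "(\<Sum>x'\<in>partitions_of z. arg_gen \<rho> z x x') = arg_gen \<rho> z x x + (\<Sum>x'\<in>partitions_of z - {x}. arg_gen \<rho> z x x')"
    using x part_finite[OF assms(2)] by (simp add: sum.remove)
  also have "(\<Sum>x'\<in>partitions_of z - {x}. arg_gen \<rho> z x x') = (\<Sum>x'\<in>partitions_of z - {x}. jump_rate \<rho> x x')"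
    by (intro sum.cong refl) (auto simp: arg_gen_def)
  finally show "(\<Sum>x'\<in>partitions_of z. arg_gen \<rho> z x x') = 0" by (simp add: arg_gen_def)
qed

lemma lump_diag:
  assumes gS: "gen S Q" and gT: "gen T Q'" and RST: "R ` S \<subseteq> T"
    and off: "\<And>x w. x \<in> S \<Longrightarrow> w \<in> T \<Longrightarrow> w \<noteq> R x \<Longrightarrow> (\<Sum>x'\<in>{x'\<in>S. R x' = w}. Q x x') = Q' (R x) w"
    and x: "x \<in> S" and w: "w \<in> T"
  shows "(\<Sum>x'\<in>{x'\<in>S. R x' = w}. Q x x') = Q' (R x) w"
proof (cases "w = R x")
  case False then show ?thesis using off x w by blast
next
  case True
  have fS: "finite S" using gS by (simp add: gen_def)
  have fT: "finite T" using gT by (simp add: gen_def)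
  have Rx: "R x \<in> T" using RST x by blast
  have "0 = (\<Sum>x'\<in>S. Q x x')" using gen.rows[OF gS x] by simp
  also have "\<dots> = (\<Sum>v\<in>T. \<Sum>x'\<in>{x'\<in>S. R x' = v}. Q x x')"
    by (rule sum.group[OF fS fT RST, symmetric])
  also have "\<dots> = (\<Sum>x'\<in>{x'\<in>S. R x' = R x}. Q x x') + (\<Sum>v\<in>T - {R x}. \<Sum>x'\<in>{x'\<in>S. R x' = v}. Q x x')"
    using Rx fT by (simp add: sum.remove)
  also have "(\<Sum>v\<in>T - {R x}. \<Sum>x'\<in>{x'\<in>S. R x' = v}. Q x x') = (\<Sum>v\<in>T - {R x}. Q' (R x) v)"
    using off x by (intro sum.cong refl) auto
  finally have 1: "0 = (\<Sum>x'\<in>{x'\<in>S. R x' = R x}. Q x x') + (\<Sum>v\<in>T - {R x}. Q' (R x) v)" .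
  have "0 = (\<Sum>v\<in>T. Q' (R x) v)" using gen.rows[OF gT Rx] by simp
  also have "\<dots> = Q' (R x) (R x) + (\<Sum>v\<in>T - {R x}. Q' (R x) v)"
    using Rx fT by (simp add: sum.remove)
  finally show ?thesis using 1 True by simp
qed

lemma arg_lump:
  assumes rho: "0 < \<rho>" and yz: "y \<subseteq> z" and fz: "finite z"
    and P: "P \<in> partitions_of z" and w: "w \<in> partitions_of y"
  shows "(\<Sum>P'\<in>{P'\<in>partitions_of z. Rest y P' = w}. arg_gen \<rho> z P P') = arg_gen \<rho> y (Rest y P) w"
proof (rule lump_diag[OF gen_arg[OF rho fz] gen_arg[OF rho] _ _ P w])
  show "finite y" using fz yz finite_subset by blast
  show "Rest y ` partitions_of z \<subseteq> partitions_of y" using Rest_part[OF yz] by blast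
  fix x w assume x: "x \<in> partitions_of z" and w: "w \<in> partitions_of y" and ne: "w \<noteq> Rest y x"
  have "(\<Sum>x'\<in>{x'\<in>partitions_of z. Rest y x' = w}. arg_gen \<rho> z x x')
      = (\<Sum>x'\<in>{x'\<in>partitions_of z. Rest y x' = w}. merge_rate x x' + split_rate \<rho> x x')"
    using ne by (intro sum.cong refl) (auto simp: arg_gen_def jump_rate_def)
  also have "\<dots> = merge_rate (Rest y x) w + split_rate \<rho> (Rest y x) w"
    by (simp add: sum.distrib merge_lump[OF yz fz x ne] split_lump[OF yz fz x ne])
  also have "\<dots> = arg_gen \<rho> y (Rest y x) w" using ne by (simp add: arg_gen_def jump_rate_def)
  finally show "(\<Sum>x'\<in>{x'\<in>partitions_of z. Rest y x' = w}. arg_gen \<rho> z x x') = arg_gen \<rho> y (Rest y x) w" .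
qed

lemma card_part_le:
  fixes z :: "real set"
  assumes fz: "finite z" and Pp: "partition_on z P"
  shows "card P \<le> card z"
proof -
  define f where "f A = (SOME a. a \<in> A)" for A :: "real set"
  have fA: "f A \<in> A" if "A \<in> P" for A
    using part_block_ne[OF Pp that] unfolding f_def by (auto intro: someI_ex)
  have "inj_on f P"
  proof (rule inj_onI)
    fix A B assume "A \<in> P" "B \<in> P" "f A = f B"
    then show "A = B" using part_block_eq[OF Pp] fA by metis
  qed
  moreover have "f ` P \<subseteq> z" using fA part_block_sub[OF Pp] by blast
  ultimately show ?thesis using card_inj_on_le fz by blast
qed

lemma part_disc:
  assumes Pp: "partition_on z P" and ns: "\<And>A a b. A \<in> P \<Longrightarrow> a \<in> A \<Longrightarrow> b \<in> A \<Longrightarrow> a = b"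
  shows "P = (\<lambda>a. {a}) ` z"
proof (intro equalityI subsetI)
  fix X assume X: "X \<in> P"
  obtain a where a: "a \<in> X" using part_block_ne[OF Pp X] by blast
  have "X = {a}" using ns[OF X] a by blast
  moreover have "a \<in> z" using part_block_sub[OF Pp X] a by blast
  ultimately show "X \<in> (\<lambda>a. {a}) ` z" by blast
next
  fix X assume "X \<in> (\<lambda>a. {a}) ` z"
  then obtain a where a: "a \<in> z" "X = {a}" by blast
  then obtain B where B: "B \<in> P" "a \<in> B" using partition_onD1[OF Pp] by blast
  have "B = {a}" using ns[OF B(1)] B(2) by blast
  then show "X \<in> P" using a B by simp
qed

lemma split_step:
  assumes rho: "0 < \<rho>" and fz: "finite z" and Pp: "partition_on z P"
    and A: "A \<in> P" "a \<in> A" "b \<in> A" "a \<noteq> b"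
  shows "\<exists>P'. P' \<in> partitions_of z \<and> card P' = Suc (card P) \<and> 0 < split_rate \<rho> P P' \<and> 0 < merge_rate P' P"
proof -
  have fA: "finite A" using part_block_sub[OF Pp A(1)] fz finite_subset by blast
  have fP: "finite P" using part_finite_P[OF fz Pp] .
  define m where "m = Min A"
  have mA: "m \<in> A" unfolding m_def using fA A by (intro Min_in) auto
  have mle: "\<And>c. c \<in> A \<Longrightarrow> m \<le> c" unfolding m_def using fA by simp
  have ne2: "A - {m} \<noteq> {}" using A by auto
  define m2 where "m2 = Min (A - {m})"
  have m2A: "m2 \<in> A - {m}" unfolding m2_def using fA ne2 by (intro Min_in) auto
  have m2le: "\<And>c. c \<in> A - {m} \<Longrightarrow> m2 \<le> c" unfolding m2_def using fA by simp
  have "m \<le> m2" using m2A mle by simp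
  moreover have "m2 \<noteq> m" using m2A by simp
  ultimately have mm2: "m < m2" by simp
  have nc: "\<not> (\<exists>c\<in>A. m < c \<and> c < m2)"
  proof
    assume "\<exists>c\<in>A. m < c \<and> c < m2"
    then obtain c where c: "c \<in> A" "m < c" "c < m2" by blast
    then have "m2 \<le> c" using m2le[of c] by simp
    then show False using c by simp
  qed
  have tT: "(A, m, m2) \<in> Trip P"
    unfolding Trip_def using A(1) mA m2A mm2 nc by simp
  define X where "X = {x\<in>A. x \<le> m}"
  define Y where "Y = {x\<in>A. m2 \<le> x}"
  have X: "X = {m}"
  proof (intro equalityI subsetI)
    fix x assume "x \<in> X"
    then have "x \<in> A" "x \<le> m" by (auto simp: X_def)
    then show "x \<in> {m}" using mle[of x] by simp
  qed (use mA in \<open>auto simp: X_def\<close>)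
  have Y: "Y = A - {m}"
  proof (intro equalityI subsetI)
    fix x assume "x \<in> Y"
    then have "x \<in> A" "m2 \<le> x" by (auto simp: Y_def)
    then show "x \<in> A - {m}" using mm2 by auto
  next
    fix x assume "x \<in> A - {m}"
    then show "x \<in> Y" using m2le[of x] by (auto simp: Y_def)
  qed
  define P' where "P' = sp P (A, m, m2)"
  have P'e: "P' = insert X (insert Y (P - {A}))" unfolding P'_def sp_def X_def Y_def by simp
  have P'p: "P' \<in> partitions_of z" unfolding P'_def by (rule sp_part[OF Pp tT])
  have dis: "disjoint P" using partition_onD2[OF Pp] .
  have notin: "C \<notin> P - {A}" if "C \<subseteq> A" "C \<noteq> {}" for C
  proof
    assume "C \<in> P - {A}"
    then have "C \<inter> A = {}" using disjointD[OF dis, of C A] A(1) by auto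
    then show False using that by blast
  qed
  have XnP: "X \<notin> P - {A}" using notin[of X] X mA by auto
  have YnP: "Y \<notin> P - {A}" using notin[of Y] Y ne2 by auto
  have XY: "X \<noteq> Y" using X Y by auto
  have "card P' = Suc (Suc (card (P - {A})))"
    unfolding P'e using XnP YnP XY fP by (simp add: card_insert_if)
  also have "card (P - {A}) = card P - 1" using A(1) fP by simp
  also have "Suc (Suc (card P - 1)) = Suc (card P)"
  proof -
    have "0 < card P" using A(1) fP by (metis card_gt_0_iff empty_iff)
    then show ?thesis by simp
  qed
  finally have cP': "card P' = Suc (card P)" .
  have "0 < \<rho> * gap (A, m, m2)" using rho gap_pos[OF tT] by simp
  also have "\<rho> * gap (A, m, m2) \<le> (\<Sum>t\<in>{t\<in>Trip P. sp P t = P'}. \<rho> * gap t)"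
    using tT finite_Trip[OF fz Pp] rho gap_pos unfolding P'_def
    by (intro member_le_sum) (auto intro: less_imp_le)
  finally have sp_pos: "0 < split_rate \<rho> P P'" by (simp add: split_rate_alt)
  have fP': "finite P'" using P'e fP by simp
  have "X \<in> P'" "Y \<in> P'" unfolding P'e by simp_all
  then have "{X, Y} \<in> Pairs P'" using XY by (intro PairsI)
  moreover have "mg P' {X, Y} = P"
  proof -
    have "P' - {X, Y} = (P - {A}) - {X, Y}" unfolding P'e by (simp add: insert_Diff_if)
    also have "\<dots> = P - {A}" by (rule Diff_triv) (use XnP YnP in blast)
    finally have 1: "P' - {X, Y} = P - {A}" .
    have 2: "\<Union>{X, Y} = A" using X Y mA by auto
    show ?thesis unfolding mg_def 1 2 using insert_Diff[OF A(1)] by simp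
  qed
  ultimately have "{X, Y} \<in> {p\<in>Pairs P'. mg P' p = P}" by (intro CollectI conjI)
  moreover have "finite {p\<in>Pairs P'. mg P' p = P}" using finite_Pairs[OF fP'] by simp
  ultimately have "0 < card {p\<in>Pairs P'. mg P' p = P}" by (metis card_gt_0_iff empty_iff)
  then have "0 < merge_rate P' P" by (simp add: merge_rate_alt)
  then show ?thesis using P'p cP' sp_pos by blast
qed

lemma arg_edge:
  assumes rho: "0 < \<rho>" and fz: "finite z" and P: "P \<in> partitions_of z" and P': "P' \<in> partitions_of z"
    and ne: "P \<noteq> P'" and pos: "0 < merge_rate P P' \<or> 0 < split_rate \<rho> P P'"
  shows "(P, P') \<in> gen.E (partitions_of z) (arg_gen \<rho> z)"
proof -
  have "0 < arg_gen \<rho> z P P'"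
    using pos ne jump_rate_nonneg[OF rho fz P, of P'] by (auto simp: arg_gen_def jump_rate_def)
  then show ?thesis using P P' ne by (simp add: gen.E_def[OF gen_arg[OF rho fz]])
qed

lemma to_disc:
  assumes rho: "0 < \<rho>" and fz: "finite z" and P: "P \<in> partitions_of z"
  shows "(P, (\<lambda>a. {a}) ` z) \<in> (gen.E (partitions_of z) (arg_gen \<rho> z))\<^sup>*"
  using P
proof (induction "card z - card P" arbitrary: P rule: less_induct)
  case less
  have Pp: "partition_on z P" using less.prems by (simp add: part_mem)
  show ?case
  proof (cases "\<exists>A\<in>P. \<exists>a\<in>A. \<exists>b\<in>A. a \<noteq> b")
    case False
    then have "P = (\<lambda>a. {a}) ` z" using part_disc[OF Pp] by blast
    then show ?thesis by simp
  next
    case True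
    then obtain A a b where A: "A \<in> P" "a \<in> A" "b \<in> A" "a \<noteq> b" by blast
    obtain P' where P': "P' \<in> partitions_of z" "card P' = Suc (card P)" "0 < split_rate \<rho> P P'"
      using split_step[OF rho fz Pp A] by blast
    have "card P' \<le> card z" using card_part_le[OF fz] P'(1) by (simp add: part_mem)
    then have "card z - card P' < card z - card P" using P'(2) by simp
    then have IH: "(P', (\<lambda>a. {a}) ` z) \<in> (gen.E (partitions_of z) (arg_gen \<rho> z))\<^sup>*"
      using less.hyps P'(1) by blast
    have "P \<noteq> P'" using P'(2) by auto
    then have "(P, P') \<in> gen.E (partitions_of z) (arg_gen \<rho> z)"
      using arg_edge[OF rho fz less.prems P'(1)] P'(3) by blast
    then show ?thesis using IH by (rule converse_rtrancl_into_rtrancl)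
  qed
qed

lemma from_disc:
  assumes rho: "0 < \<rho>" and fz: "finite z" and P: "P \<in> partitions_of z"
  shows "((\<lambda>a. {a}) ` z, P) \<in> (gen.E (partitions_of z) (arg_gen \<rho> z))\<^sup>*"
  using P
proof (induction "card z - card P" arbitrary: P rule: less_induct)
  case less
  have Pp: "partition_on z P" using less.prems by (simp add: part_mem)
  show ?case
  proof (cases "\<exists>A\<in>P. \<exists>a\<in>A. \<exists>b\<in>A. a \<noteq> b")
    case False
    then have "P = (\<lambda>a. {a}) ` z" using part_disc[OF Pp] by blast
    then show ?thesis by simp
  next
    case True
    then obtain A a b where A: "A \<in> P" "a \<in> A" "b \<in> A" "a \<noteq> b" by blast
    obtain P' where P': "P' \<in> partitions_of z" "card P' = Suc (card P)" "0 < merge_rate P' P"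
      using split_step[OF rho fz Pp A] by blast
    have "card P' \<le> card z" using card_part_le[OF fz] P'(1) by (simp add: part_mem)
    then have "card z - card P' < card z - card P" using P'(2) by simp
    then have IH: "((\<lambda>a. {a}) ` z, P') \<in> (gen.E (partitions_of z) (arg_gen \<rho> z))\<^sup>*"
      using less.hyps P'(1) by blast
    have "P' \<noteq> P" using P'(2) by auto
    then have "(P', P) \<in> gen.E (partitions_of z) (arg_gen \<rho> z)"
      using arg_edge[OF rho fz P'(1) less.prems] P'(3) by blast
    with IH show ?thesis by (rule rtrancl_into_rtrancl)
  qed
qed

lemma arg_irr:
  assumes rho: "0 < \<rho>" and fz: "finite z" and "P \<in> partitions_of z" "P' \<in> partitions_of z"
  shows "(P, P') \<in> (gen.E (partitions_of z) (arg_gen \<rho> z))\<^sup>*"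
  using to_disc[OF rho fz assms(3)] from_disc[OF rho fz assms(4)] by (rule rtrancl_trans)

lemma arg_invariant_ginv: "arg_invariant \<rho> z \<mu> \<longleftrightarrow> ginv (partitions_of z) (arg_gen \<rho> z) \<mu>"
  by (simp add: arg_invariant_def ginv_def arg_trans_mexp)

lemma ex1_arg_inv:
  assumes rho: "0 < \<rho>" and fz: "finite z"
  shows "\<exists>!\<mu>. ginv (partitions_of z) (arg_gen \<rho> z) \<mu>"
proof (rule gen.ex1_ginv[OF gen_arg[OF rho fz]])
  show "\<And>a b. a \<in> partitions_of z \<Longrightarrow> b \<in> partitions_of z \<Longrightarrow> (a, b) \<in> (gen.E (partitions_of z) (arg_gen \<rho> z))\<^sup>*"
    by (rule arg_irr[OF rho fz])
  show "partitions_of z \<noteq> {}" using disc_part by blast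
qed

lemma arg_mu_ginv:
  assumes rho: "0 < \<rho>" and fz: "finite z"
  shows "ginv (partitions_of z) (arg_gen \<rho> z) (arg_mu \<rho> z)"
proof -
  have "arg_invariant \<rho> z (arg_mu \<rho> z)"
    unfolding arg_mu_def
    by (rule theI') (simp add: arg_invariant_ginv ex1_arg_inv[OF rho fz])
  then show ?thesis by (simp add: arg_invariant_ginv)
qed

theorem proposition2:
  fixes \<rho> :: real and y z :: "real set"
  assumes "\<rho> > 0" and "finite z" and "y \<subseteq> z" and "\<forall>x\<in>z. 0 \<le> x"
  shows "(\<forall>\<pi> :: real set set pmf. \<forall>ts ws.
            set_pmf \<pi> \<subseteq> partitions_of z \<and> sorted ts \<and> (\<forall>t\<in>set ts. 0 \<le> t) \<and>
            length ws = length ts \<longrightarrow>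
            arg_fdd \<rho> y (map_pmf (Rest y) \<pi>) ts ws =
            (\<Sum>xs\<in>{xs. length xs = length ts \<and> set xs \<subseteq> partitions_of z \<and> map (Rest y) xs = ws}.
               arg_fdd \<rho> z \<pi> ts xs))
         \<and> arg_mu \<rho> y = map_pmf (Rest y) (arg_mu \<rho> z)"
proof -
  note rho = assms(1) and fz = assms(2) and yz = assms(3)
  have fy: "finite y" using fz yz finite_subset by blast
  define S where "S = partitions_of z"
  define T where "T = partitions_of y"
  define Q where "Q = arg_gen \<rho> z"
  define Q' where "Q' = arg_gen \<rho> y"
  define R where "R = Rest y"
  have fS: "finite S" unfolding S_def by (rule part_finite[OF fz])
  have fT: "finite T" unfolding T_def by (rule part_finite[OF fy])
  have RST: "R ` S \<subseteq> T" unfolding R_def S_def T_def using Rest_part[OF yz] by blast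
  have lump: "\<And>x w. x \<in> S \<Longrightarrow> w \<in> T \<Longrightarrow> (\<Sum>x'\<in>{x'\<in>S. R x' = w}. Q x x') = Q' (R x) w"
    unfolding S_def T_def Q_def Q'_def R_def by (rule arg_lump[OF rho yz fz])
  have zero: "\<And>v w t. v \<in> T \<Longrightarrow> w \<notin> T \<Longrightarrow> mexp T Q' t v w = 0"
  proof -
    fix v w t assume v: "v \<in> T" and w: "w \<notin> T"
    show "mexp T Q' t v w = 0"
    proof (rule mexp_zero)
      fix u assume u: "u \<in> T"
      then have "u \<noteq> w" using w by auto
      then show "Q' u w = 0" using jump_rate_targets[of u y w \<rho>] u w
        unfolding Q'_def T_def by (simp add: arg_gen_def)
    next
      show "v \<noteq> w" using v w by auto
    qed
  qed
  have part1: "arg_fdd \<rho> y (map_pmf R \<pi>) ts ws =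
            (\<Sum>xs\<in>{xs. length xs = length ts \<and> set xs \<subseteq> S \<and> map R xs = ws}. arg_fdd \<rho> z \<pi> ts xs)"
    if \<pi>: "set_pmf \<pi> \<subseteq> S" for \<pi> :: "real set set pmf" and ts ws
  proof -
    define L where "L = {xs. length xs = length ts \<and> set xs \<subseteq> S \<and> map R xs = ws}"
    have fL: "finite L"
      by (rule finite_subset[OF _ finite_lists_length_eq[OF fS, of "length ts"]]) (auto simp: L_def)
    have "arg_fdd \<rho> y (map_pmf R \<pi>) ts ws = (\<Sum>v\<in>T. pmf (map_pmf R \<pi>) v * path_prob (mexp T Q') v 0 ts ws)"
      by (simp add: arg_fdd_def arg_trans_mexp T_def Q'_def)
    also have "\<dots> = (\<Sum>v\<in>T. \<Sum>x\<in>{x\<in>S. R x = v}. pmf \<pi> x * path_prob (mexp T Q') (R x) 0 ts ws)"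
      by (simp add: pmf_map_sum[OF fS \<pi>] sum_distrib_right)
    also have "\<dots> = (\<Sum>x\<in>S. pmf \<pi> x * path_prob (mexp T Q') (R x) 0 ts ws)"
      by (rule sum.group[OF fS fT RST])
    also have "\<dots> = (\<Sum>x\<in>S. pmf \<pi> x * (\<Sum>xs\<in>L. path_prob (mexp S Q) x 0 ts xs))"
      unfolding L_def by (intro sum.cong refl) (simp add: path_lump[where Q=Q and Q'=Q' and R=R, OF fS fT RST lump zero])
    also have "\<dots> = (\<Sum>xs\<in>L. \<Sum>x\<in>S. pmf \<pi> x * path_prob (mexp S Q) x 0 ts xs)"
      by (simp add: sum_distrib_left) (rule sum.swap)
    also have "\<dots> = (\<Sum>xs\<in>L. arg_fdd \<rho> z \<pi> ts xs)"
      by (simp add: arg_fdd_def arg_trans_mexp S_def Q_def)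
    finally show ?thesis unfolding L_def .
  qed
  have part2: "arg_mu \<rho> y = map_pmf R (arg_mu \<rho> z)"
  proof -
    have gz: "ginv S Q (arg_mu \<rho> z)" unfolding S_def Q_def by (rule arg_mu_ginv[OF rho fz])
    have "ginv T Q' (map_pmf R (arg_mu \<rho> z))"
      using lump_inv[of S T R Q Q' "arg_mu \<rho> z"] fS fT RST lump gz by blast
    moreover have "ginv T Q' (arg_mu \<rho> y)" unfolding T_def Q'_def by (rule arg_mu_ginv[OF rho fy])
    ultimately show ?thesis using ex1_arg_inv[OF rho fy] unfolding T_def Q'_def by blast
  qed
  show ?thesis using part1 part2 unfolding S_def R_def by blast
qed

end
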